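(* For every $i\in\{0,\ldots,k-n\}$, the boundary of $C_i$ in $\mathcal{F}_{n+1,2d}$ is $$\partial C_i=\{f\in C_i : \text{for every } A\in\mathcal{G}^{-1}(f)\text{ there exists }[z]\in V_i(\mathbb{R})\text{ with } q_A(z)\leq 0\}.$$
   Context: Let $n,d\geq 1$ be integers. $\mathcal{F}_{n+1,l}$ denotes the real vector space of real forms of degree $l$ in $X=(X_0,\ldots,X_n)$, with its Euclidean topology. Let $k:=\binom{n+d}{n}-1$. Order $I_{n+1,d}:=\{\alpha\in\mathbb{N}_0^{n+1}: |\alpha|=d\}$ lexicographically in decreasing order as $\alpha_0,\ldots,\alpha_k$ (so $\alpha_0=(d,0,\ldots,0)$, $\alpha_k=(0,\ldots,0,d)$), and set $m_j(X):=X^{\alpha_j}$. For $A\in\mathrm{Sym}_{k+1}(\mathbb{R})$ let $q_A(Z):=ZAZ^t$, $Z=(Z_0,\ldots,Z_k)$, and let $\mathcal{G}:\mathrm{Sym}_{k+1}(\mathbb{R})\to\mathcal{F}_{n+1,2d}$, $\mathcal{G}(A):=q_A(m_0(X),\ldots,m_k(X))$. For $i\in\{0,\ldots,k-n\}$ let $H_i:=\{[z]\in\mathbb{P}^k(\mathbb{C}) : \exists x\in\mathbb{C}^{n+1},\ (z_0,\ldots,z_{n+i})=(m_0(x),\ldots,m_{n+i}(x))\}$, $V_i$ its Zariski closure in $\mathbb{P}^k$, $V_i(\mathbb{R})$ its real points, and $C_i:=\{f\in\mathcal{F}_{n+1,2d} : \exists A\in\mathcal{G}^{-1}(f),\ q_A(z)\geq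 0\ \forall [z]\in V_i(\mathbb{R})\}$. (The sign of $q_A(z)$ does not depend on the representative $z$ of $[z]$.) *)

theory Defs
  imports "HOL-Analysis.Analysis"
begin

text \<open>Exponent vectors alpha = (alpha_0,...,alpha_m) (zero beyond index m) of total degree l,
  i.e. the index set I_{m+1,l}.\<close>
definition exps :: "nat \<Rightarrow> nat \<Rightarrow> (nat \<Rightarrow> nat) set" where
  "exps m l = {\<alpha>. (\<forall>i>m. \<alpha> i = 0) \<and> (\<Sum>i\<le>m. \<alpha> i) = l}"

definition lex_gt :: "nat \<Rightarrow> (nat \<Rightarrow> nat) \<Rightarrow> (nat \<Rightarrow> nat) \<Rightarrow> bool" where
  "lex_gt m \<alpha> \<beta> \<longleftrightarrow> (\<exists>i\<le>m. (\<forall>l<i. \<alpha> l = \<beta> l) \<and> \<alpha> i > \<beta> i)"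

definition kdim :: "nat \<Rightarrow> nat \<Rightarrow> nat" where
  "kdim n d = (n + d choose n) - 1"

text \<open>alpha_j: the j-th element of I_{n+1,d} in decreasing lexicographic order
  (the unique element having exactly j elements lexicographically greater than it).\<close>
definition mon_exp :: "nat \<Rightarrow> nat \<Rightarrow> nat \<Rightarrow> (nat \<Rightarrow> nat)" where
  "mon_exp n d j = (THE \<alpha>. \<alpha> \<in> exps n d \<and> card {\<beta> \<in> exps n d. lex_gt n \<beta> \<alpha>} = j)"

definition mon :: "nat \<Rightarrow> nat \<Rightarrow> nat \<Rightarrow> (nat \<Rightarrow> 'a) \<Rightarrow> 'a::comm_semiring_1" where
  "mon n d j x = (\<Prod>l\<le>n. x l ^ mon_exp n d j l)"

text \<open>F_{n+1,l}: real forms of degree l in X_0..X_n, represented by their coefficient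
  functions (coefficient of X^gamma), supported on I_{n+1,l}.  The topology is the
  subspace topology of the product topology, which is the Euclidean topology.\<close>
definition forms :: "nat \<Rightarrow> nat \<Rightarrow> ((nat \<Rightarrow> nat) \<Rightarrow> real) set" where
  "forms n l = {f. \<forall>\<gamma>. \<gamma> \<notin> exps n l \<longrightarrow> f \<gamma> = 0}"

definition symmat :: "nat \<Rightarrow> (nat \<Rightarrow> nat \<Rightarrow> real) set" where
  "symmat k = {A. (\<forall>i j. A i j = A j i) \<and> (\<forall>i j. (k < i \<or> k < j) \<longrightarrow> A i j = 0)}"

definition qform :: "nat \<Rightarrow> (nat \<Rightarrow> nat \<Rightarrow> real) \<Rightarrow> (nat \<Rightarrow> real) \<Rightarrow> real" where
  "qform k A z = (\<Sum>a\<le>k. \<Sum>b\<le>k. z a * A a b * z b)"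

text \<open>G(A) = q_A(m_0(X),...,m_k(X)), given by its coefficient function:
  the coefficient of X^gamma is the sum of A_ab over alpha_a + alpha_b = gamma.\<close>
definition Gmap :: "nat \<Rightarrow> nat \<Rightarrow> (nat \<Rightarrow> nat \<Rightarrow> real) \<Rightarrow> ((nat \<Rightarrow> nat) \<Rightarrow> real)" where
  "Gmap n d A = (\<lambda>\<gamma>. \<Sum>(a,b) \<in> {(a,b). a \<le> kdim n d \<and> b \<le> kdim n d \<and>
                      (\<lambda>l. mon_exp n d a l + mon_exp n d b l) = \<gamma>}. A a b)"

text \<open>Affine cone over H_i in C^{k+1} minus 0 (vectors zero beyond index k).\<close>
definition Hcone :: "nat \<Rightarrow> nat \<Rightarrow> nat \<Rightarrow> (nat \<Rightarrow> complex) set" where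
  "Hcone n d i = {z. (\<forall>l>kdim n d. z l = 0) \<and> (\<exists>l\<le>kdim n d. z l \<noteq> 0) \<and>
                     (\<exists>x::nat \<Rightarrow> complex. \<forall>l\<le>n+i. z l = mon n d l x)}"

definition hpeval :: "nat \<Rightarrow> nat \<Rightarrow> ((nat \<Rightarrow> nat) \<Rightarrow> complex) \<Rightarrow> (nat \<Rightarrow> complex) \<Rightarrow> complex" where
  "hpeval m e p z = (\<Sum>\<beta>\<in>exps m e. p \<beta> * (\<Prod>l\<le>m. z l ^ \<beta> l))"

text \<open>V_i(R): real points of the Zariski closure V_i of H_i in P^k, given by their real
  representatives z in R^{k+1} minus 0: all homogeneous polynomials vanishing on H_i vanish at z.\<close>
definition Vreal :: "nat \<Rightarrow> nat \<Rightarrow> nat \<Rightarrow> (nat \<Rightarrow> real) set" where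
  "Vreal n d i = {z. (\<forall>l>kdim n d. z l = 0) \<and> (\<exists>l\<le>kdim n d. z l \<noteq> 0) \<and>
     (\<forall>e p. (\<forall>w\<in>Hcone n d i. hpeval (kdim n d) e p w = 0) \<longrightarrow>
            hpeval (kdim n d) e p (\<lambda>l. complex_of_real (z l)) = 0)}"

definition Ccone :: "nat \<Rightarrow> nat \<Rightarrow> nat \<Rightarrow> ((nat \<Rightarrow> nat) \<Rightarrow> real) set" where
  "Ccone n d i = {f \<in> forms n (2*d). \<exists>A\<in>symmat (kdim n d). Gmap n d A = f \<and>
                    (\<forall>z\<in>Vreal n d i. qform (kdim n d) A z \<ge> 0)}"

end

theory Submission
  imports Defs "HOL-Computational_Algebra.Polynomial"
begin

lemma exps_zero: "\<alpha> \<in> exps m l \<Longrightarrow> m < i \<Longrightarrow> \<alpha> i = 0"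
  by (auto simp: exps_def)

lemma exps_sum: "\<alpha> \<in> exps m l \<Longrightarrow> (\<Sum>i\<le>m. \<alpha> i) = l"
  by (auto simp: exps_def)

lemma exps_eqI: "\<alpha> \<in> exps m l \<Longrightarrow> \<beta> \<in> exps m l' \<Longrightarrow> (\<And>i. i \<le> m \<Longrightarrow> \<alpha> i = \<beta> i) \<Longrightarrow> \<alpha> = \<beta>"
  by (rule ext) (metis exps_zero not_le)

lemma sum_list_map_upt: "sum_list (map (f::nat\<Rightarrow>nat) [0..<Suc m]) = sum f {..m}"
  by (induction m) auto

lemma exps_bij_lists:
  "bij_betw (\<lambda>\<alpha>. map \<alpha> [0..<Suc m]) (exps m l) {xs. size xs = Suc m \<and> sum_list xs = l}"
proof (rule bij_betw_imageI)
  show "inj_on (\<lambda>\<alpha>. map \<alpha> [0..<Suc m]) (exps m l)"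
  proof (rule inj_onI)
    fix \<alpha> \<beta> assume a: "\<alpha> \<in> exps m l" "\<beta> \<in> exps m l" "map \<alpha> [0..<Suc m] = map \<beta> [0..<Suc m]"
    show "\<alpha> = \<beta>"
    proof (rule exps_eqI[OF a(1) a(2)])
      fix i assume "i \<le> m"
      then show "\<alpha> i = \<beta> i" using a(3) by (metis atLeastLessThan_iff le_imp_less_Suc map_eq_conv set_upt zero_le)
    qed
  qed
next
  show "(\<lambda>\<alpha>. map \<alpha> [0..<Suc m]) ` exps m l = {xs. size xs = Suc m \<and> sum_list xs = l}"
  proof
    show "(\<lambda>\<alpha>. map \<alpha> [0..<Suc m]) ` exps m l \<subseteq> {xs. size xs = Suc m \<and> sum_list xs = l}"
      by (auto simp only: exps_def sum_list_map_upt) auto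
  next
    show "{xs. size xs = Suc m \<and> sum_list xs = l} \<subseteq> (\<lambda>\<alpha>. map \<alpha> [0..<Suc m]) ` exps m l"
    proof
      fix xs :: "nat list" assume xs: "xs \<in> {xs. size xs = Suc m \<and> sum_list xs = l}"
      define \<alpha> where "\<alpha> = (\<lambda>i. if i \<le> m then xs ! i else 0)"
      have mx: "map \<alpha> [0..<Suc m] = xs"
        using xs by (intro nth_equalityI) (auto simp: \<alpha>_def nth_map simp del: upt_Suc)
      have "(\<Sum>i\<le>m. \<alpha> i) = sum_list (map \<alpha> [0..<Suc m])"
        by (simp only: sum_list_map_upt)
      also have "\<dots> = l" using mx xs by simp
      finally have "\<alpha> \<in> exps m l" by (auto simp: exps_def \<alpha>_def)
      then show "xs \<in> (\<lambda>\<alpha>. map \<alpha> [0..<Suc m]) ` exps m l" using mx by force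
    qed
  qed
qed

lemma card_exps: "card (exps m l) = (m + l choose m)"
proof -
  have "card (exps m l) = card {xs::nat list. size xs = Suc m \<and> sum_list xs = l}"
    using bij_betw_same_card[OF exps_bij_lists] .
  also have "\<dots> = (l + Suc m - 1) choose l" by (rule card_length_sum_list)
  also have "\<dots> = (m + l choose m)"
    by (metis add.commute add_Suc_right binomial_symmetric diff_Suc_1 le_add1 add_diff_cancel_left')
  finally show ?thesis .
qed

lemma finite_exps: "finite (exps m l)"
proof -
  have "card (exps m l) > 0" by (simp add: card_exps)
  then show ?thesis using card_gt_0_iff by blast
qed

lemma card_exps_kdim: "card (exps n d) = Suc (kdim n d)"
  by (simp add: card_exps kdim_def)


lemma lex_irrefl: "\<not> lex_gt m \<alpha> \<alpha>"
  by (auto simp: lex_gt_def)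

lemma lex_trans: "lex_gt m \<alpha> \<beta> \<Longrightarrow> lex_gt m \<beta> \<gamma> \<Longrightarrow> lex_gt m \<alpha> \<gamma>"
  unfolding lex_gt_def
proof (elim exE conjE)
  fix i j assume i: "i \<le> m" "\<forall>l<i. \<alpha> l = \<beta> l" "\<beta> i < \<alpha> i"
    and j: "j \<le> m" "\<forall>l<j. \<beta> l = \<gamma> l" "\<gamma> j < \<beta> j"
  show "\<exists>i\<le>m. (\<forall>l<i. \<alpha> l = \<gamma> l) \<and> \<gamma> i < \<alpha> i"
  proof (cases i j rule: linorder_cases)
    case less then show ?thesis using i j by (intro exI[of _ i]) auto
  next
    case equal then show ?thesis using i j by (intro exI[of _ i]) auto
  next
    case greater then show ?thesis using i j by (intro exI[of _ j]) auto
  qed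
qed

lemma lex_total:
  assumes "\<alpha> \<noteq> \<beta>" "\<forall>i>m. \<alpha> i = 0" "\<forall>i>m. \<beta> i = 0"
  shows "lex_gt m \<alpha> \<beta> \<or> lex_gt m \<beta> \<alpha>"
proof -
  obtain i where "\<alpha> i \<noteq> \<beta> i" using assms(1) by blast
  define j where "j = (LEAST i. \<alpha> i \<noteq> \<beta> i)"
  have j1: "\<alpha> j \<noteq> \<beta> j" unfolding j_def by (rule LeastI) fact
  have j2: "\<forall>l<j. \<alpha> l = \<beta> l" unfolding j_def using not_less_Least by blast
  have "j \<le> m" using j1 assms(2,3) by (metis not_le)
  then show ?thesis using j1 j2 unfolding lex_gt_def
    by (metis nat_neq_iff)
qed

definition rk :: "nat \<Rightarrow> nat \<Rightarrow> (nat \<Rightarrow> nat) \<Rightarrow> nat" where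
  "rk m l \<alpha> = card {\<beta> \<in> exps m l. lex_gt m \<beta> \<alpha>}"

lemma rk_lt: assumes "\<alpha> \<in> exps m l" shows "rk m l \<alpha> < card (exps m l)"
proof -
  have "{\<beta> \<in> exps m l. lex_gt m \<beta> \<alpha>} \<subset> exps m l"
    using assms lex_irrefl by blast
  then show ?thesis unfolding rk_def by (simp add: finite_exps psubset_card_mono)
qed

lemma rk_inj: "inj_on (rk m l) (exps m l)"
proof (rule inj_onI, rule ccontr)
  fix \<alpha> \<beta> assume a: "\<alpha> \<in> exps m l" "\<beta> \<in> exps m l" "rk m l \<alpha> = rk m l \<beta>" "\<alpha> \<noteq> \<beta>"
  have strict: "rk m l x < rk m l y" if "x \<in> exps m l" "lex_gt m x y" for x y
  proof -
    have "{\<beta> \<in> exps m l. lex_gt m \<beta> x} \<subset> {\<beta> \<in> exps m l. lex_gt m \<beta> y}"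
      using that lex_trans lex_irrefl by blast
    then show ?thesis unfolding rk_def by (simp add: finite_exps psubset_card_mono)
  qed
  have "lex_gt m \<alpha> \<beta> \<or> lex_gt m \<beta> \<alpha>"
    using a lex_total exps_zero by metis
  then show False using strict a by (metis less_irrefl)
qed

lemma rk_bij: "bij_betw (rk m l) (exps m l) {..<card (exps m l)}"
proof -
  have sub: "rk m l ` exps m l \<subseteq> {..<card (exps m l)}" using rk_lt by auto
  have "card (rk m l ` exps m l) = card {..<card (exps m l)}"
    using card_image[OF rk_inj] by simp
  then have "rk m l ` exps m l = {..<card (exps m l)}"
    using sub by (simp add: card_subset_eq)
  then show ?thesis using rk_inj by (simp add: bij_betw_def)
qed

lemma mon_exp_rk: assumes "\<alpha> \<in> exps n d" shows "mon_exp n d (rk n d \<alpha>) = \<alpha>"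
  unfolding mon_exp_def
proof (rule the_equality)
  show "\<alpha> \<in> exps n d \<and> card {\<beta> \<in> exps n d. lex_gt n \<beta> \<alpha>} = rk n d \<alpha>"
    using assms by (simp add: rk_def)
next
  fix \<beta> assume "\<beta> \<in> exps n d \<and> card {\<gamma> \<in> exps n d. lex_gt n \<gamma> \<beta>} = rk n d \<alpha>"
  then show "\<beta> = \<alpha>" using rk_inj[of n d] assms unfolding inj_on_def rk_def by blast
qed

lemma mon_exp_in: assumes "j \<le> kdim n d"
  shows "mon_exp n d j \<in> exps n d" "rk n d (mon_exp n d j) = j"
proof -
  have "j \<in> {..<card (exps n d)}" using assms card_exps_kdim by auto
  then obtain \<alpha> where "\<alpha> \<in> exps n d" "rk n d \<alpha> = j"
    using rk_bij[of n d] unfolding bij_betw_def by (metis imageE)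
  then show "mon_exp n d j \<in> exps n d" "rk n d (mon_exp n d j) = j"
    using mon_exp_rk by auto
qed

lemma mon_exp_inj: "a \<le> kdim n d \<Longrightarrow> b \<le> kdim n d \<Longrightarrow> mon_exp n d a = mon_exp n d b \<Longrightarrow> a = b"
  by (metis mon_exp_in(2))

lemma mon_exp_surj: assumes "\<alpha> \<in> exps n d" shows "\<exists>a\<le>kdim n d. mon_exp n d a = \<alpha>"
proof -
  have "rk n d \<alpha> \<le> kdim n d" using rk_lt[OF assms] card_exps_kdim by (metis less_Suc_eq_le)
  then show ?thesis using mon_exp_rk[OF assms] by blast
qed

lemma mon_exp_bij: "bij_betw (mon_exp n d) {..kdim n d} (exps n d)"
  unfolding bij_betw_def inj_on_def
  using mon_exp_inj mon_exp_in(1) mon_exp_surj by fastforce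

lemma split_exp:
  fixes m :: nat and \<gamma> :: "nat \<Rightarrow> nat"
  shows "(\<forall>i>m. \<gamma> i = 0) \<Longrightarrow> s \<le> (\<Sum>i\<le>m. \<gamma> i) \<Longrightarrow>
   \<exists>\<alpha>. (\<forall>i. \<alpha> i \<le> \<gamma> i) \<and> (\<forall>i>m. \<alpha> i = 0) \<and> (\<Sum>i\<le>m. \<alpha> i) = (s::nat)"
proof (induction m arbitrary: \<gamma> s)
  case 0
  then show ?case by (intro exI[of _ "\<lambda>i. if i = 0 then s else 0"]) auto
next
  case (Suc m)
  define t where "t = min s (\<gamma> (Suc m))"
  define \<gamma>' where "\<gamma>' = \<gamma>(Suc m := 0)"
  have s1: "(\<Sum>i\<le>m. \<gamma>' i) = (\<Sum>i\<le>m. \<gamma> i)" unfolding \<gamma>'_def by (intro sum.cong) auto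
  have "s - t \<le> (\<Sum>i\<le>m. \<gamma>' i)" using Suc.prems(2) unfolding s1 t_def by auto
  moreover have "\<forall>i>m. \<gamma>' i = 0" using Suc.prems(1) unfolding \<gamma>'_def by auto
  ultimately obtain \<alpha> where a: "\<forall>i. \<alpha> i \<le> \<gamma>' i" "\<forall>i>m. \<alpha> i = 0" "(\<Sum>i\<le>m. \<alpha> i) = s - t"
    using Suc.IH by blast
  have s2: "(\<Sum>i\<le>m. (\<alpha>(Suc m := t)) i) = (\<Sum>i\<le>m. \<alpha> i)" by (intro sum.cong) auto
  show ?case
  proof (intro exI[of _ "\<alpha>(Suc m := t)"] conjI allI impI)
    fix i show "(\<alpha>(Suc m := t)) i \<le> \<gamma> i" using a(1)[rule_format, of i]
      by (cases "i = Suc m") (auto simp: t_def \<gamma>'_def)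
  next
    fix i assume "Suc m < i" then show "(\<alpha>(Suc m := t)) i = 0" using a(2) by auto
  next
    show "(\<Sum>i\<le>Suc m. (\<alpha>(Suc m := t)) i) = s" using s2 a(3) t_def by simp
  qed
qed

lemma split_exps2: assumes "\<gamma> \<in> exps n (2*d)"
  shows "\<exists>\<alpha>\<in>exps n d. \<exists>\<beta>\<in>exps n d. (\<lambda>l. \<alpha> l + \<beta> l) = \<gamma>"
proof -
  obtain \<alpha> where a: "\<forall>i. \<alpha> i \<le> \<gamma> i" "\<forall>i>n. \<alpha> i = 0" "(\<Sum>i\<le>n. \<alpha> i) = d"
    using split_exp[of n \<gamma> d] assms by (auto simp: exps_def)
  define \<beta> where "\<beta> = (\<lambda>i. \<gamma> i - \<alpha> i)"
  have "(\<Sum>i\<le>n. \<beta> i) = (\<Sum>i\<le>n. \<gamma> i) - (\<Sum>i\<le>n. \<alpha> i)"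
    unfolding \<beta>_def using a(1) by (simp add: sum_subtractf_nat)
  then have "\<beta> \<in> exps n d" using assms a by (auto simp: exps_def \<beta>_def)
  moreover have "\<alpha> \<in> exps n d" using a by (auto simp: exps_def)
  moreover have "(\<lambda>l. \<alpha> l + \<beta> l) = \<gamma>" using a(1) by (auto simp: \<beta>_def)
  ultimately show ?thesis by blast
qed

lemma exps_add: "\<alpha> \<in> exps n d \<Longrightarrow> \<beta> \<in> exps n d \<Longrightarrow> (\<lambda>l. \<alpha> l + \<beta> l) \<in> exps n (2*d)"
  by (auto simp: exps_def sum.distrib)

lemma Gmap_forms: "Gmap n d A \<in> forms n (2*d)"
proof -
  have "Gmap n d A \<gamma> = 0" if "\<gamma> \<notin> exps n (2*d)" for \<gamma>
  proof -
    have e: "{(a,b). a \<le> kdim n d \<and> b \<le> kdim n d \<and> (\<lambda>l. mon_exp n d a l + mon_exp n d b l) = \<gamma>} = {}"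
    proof (rule ccontr)
      assume "{(a,b). a \<le> kdim n d \<and> b \<le> kdim n d \<and> (\<lambda>l. mon_exp n d a l + mon_exp n d b l) = \<gamma>} \<noteq> {}"
      then obtain a b where ab: "a \<le> kdim n d" "b \<le> kdim n d" "(\<lambda>l. mon_exp n d a l + mon_exp n d b l) = \<gamma>"
        by blast
      have "(\<lambda>l. mon_exp n d a l + mon_exp n d b l) \<in> exps n (2*d)"
        by (rule exps_add[OF mon_exp_in(1)[OF ab(1)] mon_exp_in(1)[OF ab(2)]])
      then show False using ab(3) that by simp
    qed
    show ?thesis unfolding Gmap_def e by simp
  qed
  then show ?thesis by (auto simp: forms_def)
qed

lemma finite_pairs: "finite {(a,b). a \<le> (K::nat) \<and> b \<le> K \<and> P a b}"
  by (rule finite_subset[of _ "{..K}\<times>{..K}"]) auto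

lemma sum_pair_lin: "finite J \<Longrightarrow> (\<Sum>p\<in>S. case p of (a,b) \<Rightarrow> \<Sum>j\<in>J. c j * B j a b) = (\<Sum>j\<in>J. c j * (\<Sum>p\<in>S. case p of (a,b) \<Rightarrow> (B j a b::real)))"
proof -
  have "(\<Sum>p\<in>S. case p of (a,b) \<Rightarrow> \<Sum>j\<in>J. c j * B j a b) = (\<Sum>p\<in>S. \<Sum>j\<in>J. c j * (case p of (a,b) \<Rightarrow> B j a b))"
    by (intro sum.cong) (auto split: prod.splits)
  also have "\<dots> = (\<Sum>j\<in>J. \<Sum>p\<in>S. c j * (case p of (a,b) \<Rightarrow> B j a b))" by (rule sum.swap)
  also have "\<dots> = (\<Sum>j\<in>J. c j * (\<Sum>p\<in>S. case p of (a,b) \<Rightarrow> B j a b))" by (simp add: sum_distrib_left)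
  finally show ?thesis .
qed

lemma Gmap_sum: "finite J \<Longrightarrow> Gmap n d (\<lambda>a b. \<Sum>j\<in>J. c j * B j a b) \<gamma> = (\<Sum>j\<in>J. c j * Gmap n d (B j) \<gamma>)"
  unfolding Gmap_def by (rule sum_pair_lin)

lemma sum_pair_add: "(\<Sum>p\<in>S. case p of (a,b) \<Rightarrow> A a b + c * B a b) = (\<Sum>p\<in>S. case p of (a,b) \<Rightarrow> (A a b::real)) + c * (\<Sum>p\<in>S. case p of (a,b) \<Rightarrow> B a b)"
proof -
  have "(\<Sum>p\<in>S. case p of (a,b) \<Rightarrow> A a b + c * B a b) = (\<Sum>p\<in>S. (case p of (a,b) \<Rightarrow> A a b) + c * (case p of (a,b) \<Rightarrow> B a b))"
    by (intro sum.cong) (auto split: prod.splits)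
  also have "\<dots> = (\<Sum>p\<in>S. case p of (a,b) \<Rightarrow> (A a b::real)) + c * (\<Sum>p\<in>S. case p of (a,b) \<Rightarrow> B a b)"
    by (simp add: sum.distrib sum_distrib_left)
  finally show ?thesis .
qed

lemma Gmap_add: "Gmap n d (\<lambda>a b. A a b + c * B a b) \<gamma> = Gmap n d A \<gamma> + c * Gmap n d B \<gamma>"
  unfolding Gmap_def by (rule sum_pair_add)

definition dm :: "nat \<Rightarrow> nat \<Rightarrow> nat \<Rightarrow> nat \<Rightarrow> real" where
  "dm a b = (\<lambda>x y. if x = a \<and> y = b then 1 else 0)"

lemma Gmap_dm: assumes "a \<le> kdim n d" "b \<le> kdim n d"
  shows "Gmap n d (dm a b) \<gamma> = (if (\<lambda>l. mon_exp n d a l + mon_exp n d b l) = \<gamma> then 1 else 0)"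
proof -
  let ?S = "{(x,y). x \<le> kdim n d \<and> y \<le> kdim n d \<and> (\<lambda>l. mon_exp n d x l + mon_exp n d y l) = \<gamma>}"
  have "(\<Sum>p\<in>?S. case p of (x,y) \<Rightarrow> dm a b x y) = (\<Sum>p\<in>?S. if p = (a,b) then 1 else 0)"
    by (intro sum.cong) (auto simp: dm_def split: prod.splits)
  also have "\<dots> = (if (a,b) \<in> ?S then 1 else 0)"
    by (subst sum.delta[OF finite_pairs]) (rule refl)
  finally show ?thesis unfolding Gmap_def using assms by simp
qed

lemma Gmap_zero: "Gmap n d (\<lambda>a b. 0) \<gamma> = 0"
  unfolding Gmap_def by simp

lemma Gmap_scale: "Gmap n d (\<lambda>a b. c * B a b) \<gamma> = c * Gmap n d B \<gamma>"
  using Gmap_add[of n d "\<lambda>a b. 0" c B \<gamma>] by (simp add: Gmap_zero)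

lemma sum_dm: assumes "a \<le> K" "b \<le> K" shows "(\<Sum>x\<le>K. \<Sum>y\<le>K. dm a b x y) = 1"
proof -
  have "(\<Sum>x\<le>K. \<Sum>y\<le>K. dm a b x y) = (\<Sum>x\<le>K. if x = a then 1 else 0)"
    by (intro sum.cong refl) (use assms in \<open>auto simp: dm_def\<close>)
  also have "\<dots> = 1" using assms by simp
  finally show ?thesis .
qed

lemma dm_zero: "\<not> (i = a \<and> j = b) \<Longrightarrow> dm a b i j = 0"
  unfolding dm_def by (rule if_not_P)

lemma dm_sym: "dm a b i j = dm b a j i"
  unfolding dm_def by (simp only: conj_commute)

lemma dm_nonneg: "dm a b i j \<ge> 0"
  unfolding dm_def by simp

lemma right_inv:
  assumes "\<gamma> \<in> exps n (2*d)"
  shows "\<exists>E. E \<in> symmat (kdim n d) \<and> (\<forall>\<gamma>'. Gmap n d E \<gamma>' = (if \<gamma>' = \<gamma> then 1 else 0)) \<and>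
             (\<Sum>a\<le>kdim n d. \<Sum>b\<le>kdim n d. \<bar>E a b\<bar>) \<le> 1"
proof -
  obtain \<alpha> \<beta> where ab: "\<alpha> \<in> exps n d" "\<beta> \<in> exps n d" "(\<lambda>l. \<alpha> l + \<beta> l) = \<gamma>"
    using split_exps2[OF assms] by blast
  obtain a where a: "a \<le> kdim n d" "mon_exp n d a = \<alpha>"
    using mon_exp_surj[OF ab(1)] by blast
  obtain b where b: "b \<le> kdim n d" "mon_exp n d b = \<beta>"
    using mon_exp_surj[OF ab(2)] by blast
  define E where "E = (\<lambda>x y. (1/2) * dm a b x y + (1/2) * dm b a x y)"
  have sym: "E \<in> symmat (kdim n d)" unfolding symmat_def
  proof (intro CollectI conjI allI impI)
    fix i j show "E i j = E j i" unfolding E_def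
      by (simp only: dm_sym[of a b i j] dm_sym[of b a i j] add.commute)
  next
    fix i j assume "kdim n d < i \<or> kdim n d < j"
    then have "\<not> (i = a \<and> j = b)" "\<not> (i = b \<and> j = a)" using a(1) b(1) by auto
    then show "E i j = 0" unfolding E_def using dm_zero by (metis mult_zero_right add_0)
  qed
  have G: "Gmap n d E \<gamma>' = (if \<gamma>' = \<gamma> then 1 else 0)" for \<gamma>'
  proof -
    have "Gmap n d E \<gamma>' = Gmap n d (\<lambda>x y. (1/2) * dm a b x y) \<gamma>' + (1/2) * Gmap n d (dm b a) \<gamma>'"
      unfolding E_def by (rule Gmap_add)
    also have "\<dots> = (1/2) * Gmap n d (dm a b) \<gamma>' + (1/2) * Gmap n d (dm b a) \<gamma>'"
      by (simp only: Gmap_scale)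
    also have "\<dots> = (1/2) * (if (\<lambda>l. \<alpha> l + \<beta> l) = \<gamma>' then 1 else 0) + (1/2) * (if (\<lambda>l. \<beta> l + \<alpha> l) = \<gamma>' then 1 else 0)"
      using a b by (simp only: Gmap_dm)
    also have "(\<lambda>l. \<beta> l + \<alpha> l) = (\<lambda>l. \<alpha> l + \<beta> l)" by (simp only: add.commute)
    also have "(1/2) * (if (\<lambda>l. \<alpha> l + \<beta> l) = \<gamma>' then 1 else 0) + (1/2) * (if (\<lambda>l. \<alpha> l + \<beta> l) = \<gamma>' then 1 else 0) = (if \<gamma>' = \<gamma> then (1::real) else 0)"
      unfolding ab(3) by (cases "\<gamma> = \<gamma>'") auto
    finally show ?thesis .
  qed
  have N: "(\<Sum>x\<le>kdim n d. \<Sum>y\<le>kdim n d. \<bar>E x y\<bar>) \<le> 1"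
  proof -
    have "(\<Sum>x\<le>kdim n d. \<Sum>y\<le>kdim n d. \<bar>E x y\<bar>) =
          (\<Sum>x\<le>kdim n d. \<Sum>y\<le>kdim n d. (1/2) * dm a b x y + (1/2) * dm b a x y)"
      by (intro sum.cong refl) (simp add: E_def dm_nonneg)
    also have "\<dots> = (1/2) * (\<Sum>x\<le>kdim n d. \<Sum>y\<le>kdim n d. dm a b x y) + (1/2) * (\<Sum>x\<le>kdim n d. \<Sum>y\<le>kdim n d. dm b a x y)"
      by (simp only: sum.distrib sum_distrib_left)
    also have "\<dots> = 1" using sum_dm[OF a(1) b(1)] sum_dm[OF b(1) a(1)] by simp
    finally show ?thesis by simp
  qed
  show ?thesis using sym G N by (intro exI[of _ E] conjI allI)
qed

definition xp :: "nat \<Rightarrow> (nat \<Rightarrow> nat) \<Rightarrow> (nat \<Rightarrow> 'a) \<Rightarrow> 'a::comm_semiring_1" where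
  "xp n \<gamma> x = (\<Prod>l\<le>n. x l ^ \<gamma> l)"

lemma mon_xp: "mon n d a x = xp n (mon_exp n d a) x"
  by (simp add: mon_def xp_def)

lemma xp_add: "xp n (\<lambda>l. \<alpha> l + \<beta> l) x = xp n \<alpha> x * xp n \<beta> x"
  by (simp add: xp_def power_add prod.distrib)

lemma quad_Gmap:
  fixes x :: "nat \<Rightarrow> 'a::{comm_ring_1,real_algebra_1}"
  shows "(\<Sum>a\<le>kdim n d. \<Sum>b\<le>kdim n d. mon n d a x * of_real (A a b) * mon n d b x) =
    (\<Sum>\<gamma>\<in>(\<lambda>(a,b). \<lambda>l. mon_exp n d a l + mon_exp n d b l) ` ({..kdim n d}\<times>{..kdim n d}).
        of_real (Gmap n d A \<gamma>) * xp n \<gamma> x)"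
proof -
  let ?S = "{..kdim n d}\<times>{..kdim n d}"
  let ?h = "\<lambda>(a,b). \<lambda>l. mon_exp n d a l + mon_exp n d b l"
  let ?g = "\<lambda>p. of_real (A (fst p) (snd p)) * xp n (?h p) x"
  have "(\<Sum>a\<le>kdim n d. \<Sum>b\<le>kdim n d. mon n d a x * of_real (A a b) * mon n d b x) =
        (\<Sum>a\<le>kdim n d. \<Sum>b\<le>kdim n d. ?g (a,b))"
    by (intro sum.cong refl) (simp add: mon_xp xp_add mult_ac)
  also have "\<dots> = (\<Sum>p\<in>?S. ?g p)" by (simp add: sum.cartesian_product case_prod_unfold)
  also have "\<dots> = (\<Sum>\<gamma>\<in>?h ` ?S. \<Sum>p\<in>{p\<in>?S. ?h p = \<gamma>}. ?g p)"
    by (rule sum.image_gen) simp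
  also have "\<dots> = (\<Sum>\<gamma>\<in>?h ` ?S. of_real (Gmap n d A \<gamma>) * xp n \<gamma> x)"
  proof (intro sum.cong refl)
    fix \<gamma>
    have e: "{p\<in>?S. ?h p = \<gamma>} = {(a,b). a \<le> kdim n d \<and> b \<le> kdim n d \<and> (\<lambda>l. mon_exp n d a l + mon_exp n d b l) = \<gamma>}"
      by auto
    have "(\<Sum>p\<in>{p\<in>?S. ?h p = \<gamma>}. ?g p) = (\<Sum>p\<in>{p\<in>?S. ?h p = \<gamma>}. of_real (A (fst p) (snd p)) * xp n \<gamma> x)"
      by (intro sum.cong refl) auto
    also have "\<dots> = of_real (\<Sum>p\<in>{p\<in>?S. ?h p = \<gamma>}. A (fst p) (snd p)) * xp n \<gamma> x"
      by (simp add: sum_distrib_right)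
    also have "(\<Sum>p\<in>{p\<in>?S. ?h p = \<gamma>}. A (fst p) (snd p)) = Gmap n d A \<gamma>"
      unfolding Gmap_def e by (intro sum.cong refl) auto
    finally show "(\<Sum>p\<in>{p\<in>?S. ?h p = \<gamma>}. ?g p) = of_real (Gmap n d A \<gamma>) * xp n \<gamma> x" .
  qed
  finally show ?thesis .
qed

lemma quad_zero:
  fixes x :: "nat \<Rightarrow> 'a::{comm_ring_1,real_algebra_1}"
  assumes "\<forall>\<gamma>. Gmap n d A \<gamma> = 0"
  shows "(\<Sum>a\<le>kdim n d. \<Sum>b\<le>kdim n d. mon n d a x * of_real (A a b) * mon n d b x) = 0"
  unfolding quad_Gmap using assms by simp

lemma univ_zero:
  fixes a :: "nat \<Rightarrow> real"
  assumes "finite Ks" "\<forall>t. (\<Sum>k\<in>Ks. a k * t ^ k) = 0" "k \<in> Ks"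
  shows "a k = 0"
proof -
  define p where "p = (\<Sum>k\<in>Ks. monom (a k) k)"
  have "poly p t = 0" for t
    using assms(2) by (simp add: p_def poly_sum poly_monom)
  then have "p = 0" using poly_all_0_iff_0 by blast
  have "coeff p k = (\<Sum>k'\<in>Ks. if k' = k then a k' else 0)"
    unfolding p_def coeff_sum by (intro sum.cong refl) (simp add: coeff_monom)
  also have "\<dots> = a k" using assms(1,3) by (simp add: sum.delta)
  finally show ?thesis using \<open>p = 0\<close> by simp
qed

lemma mv_zero:
  fixes c :: "(nat \<Rightarrow> nat) \<Rightarrow> real"
  assumes "finite F" "\<forall>\<alpha>\<in>F. \<forall>\<beta>\<in>F. (\<forall>l<m. \<alpha> l = \<beta> l) \<longrightarrow> \<alpha> = \<beta>"
    "\<forall>x::nat \<Rightarrow> real. (\<Sum>\<alpha>\<in>F. c \<alpha> * (\<Prod>l<m. x l ^ \<alpha> l)) = 0"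
  shows "\<forall>\<alpha>\<in>F. c \<alpha> = 0"
  using assms
proof (induction m arbitrary: F)
  case 0
  show ?case
  proof
    fix \<alpha> assume a: "\<alpha> \<in> F"
    then have "F = {\<alpha>}" using "0.prems"(2) by auto
    then show "c \<alpha> = 0" using "0.prems"(3) by simp
  qed
next
  case (Suc m)
  show ?case
  proof
    fix \<alpha>0 assume a0: "\<alpha>0 \<in> F"
    define Fk where "Fk = (\<lambda>k. {\<alpha>\<in>F. \<alpha> m = k})"
    define D where "D = (\<lambda>k (x::nat\<Rightarrow>real). \<Sum>\<alpha>\<in>Fk k. c \<alpha> * (\<Prod>l<m. x l ^ \<alpha> l))"
    have grp: "(\<Sum>\<alpha>\<in>F. c \<alpha> * (\<Prod>l<Suc m. x l ^ \<alpha> l)) = (\<Sum>k\<in>(\<lambda>\<alpha>. \<alpha> m) ` F. D k x * x m ^ k)" for x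
    proof -
      have "(\<Sum>\<alpha>\<in>F. c \<alpha> * (\<Prod>l<Suc m. x l ^ \<alpha> l)) =
            (\<Sum>k\<in>(\<lambda>\<alpha>. \<alpha> m) ` F. \<Sum>\<alpha>\<in>{\<alpha>\<in>F. \<alpha> m = k}. c \<alpha> * (\<Prod>l<Suc m. x l ^ \<alpha> l))"
        by (rule sum.image_gen) (rule Suc.prems(1))
      also have "\<dots> = (\<Sum>k\<in>(\<lambda>\<alpha>. \<alpha> m) ` F. D k x * x m ^ k)"
      proof (intro sum.cong refl)
        fix k
        have "(\<Sum>\<alpha>\<in>{\<alpha>\<in>F. \<alpha> m = k}. c \<alpha> * (\<Prod>l<Suc m. x l ^ \<alpha> l)) =
              (\<Sum>\<alpha>\<in>{\<alpha>\<in>F. \<alpha> m = k}. c \<alpha> * (\<Prod>l<m. x l ^ \<alpha> l) * x m ^ k)"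
          by (intro sum.cong refl) (simp add: mult.assoc)
        also have "\<dots> = D k x * x m ^ k" unfolding D_def Fk_def by (simp add: sum_distrib_right)
        finally show "(\<Sum>\<alpha>\<in>{\<alpha>\<in>F. \<alpha> m = k}. c \<alpha> * (\<Prod>l<Suc m. x l ^ \<alpha> l)) = D k x * x m ^ k" .
      qed
      finally show ?thesis .
    qed
    have Dz: "D (\<alpha>0 m) x = 0" for x
    proof -
      have "\<forall>t. (\<Sum>k\<in>(\<lambda>\<alpha>. \<alpha> m) ` F. D k x * t ^ k) = 0"
      proof
        fix t
        have Dx: "D k (x(m := t)) = D k x" for k
          unfolding D_def by (intro sum.cong refl) simp
        have "(\<Sum>k\<in>(\<lambda>\<alpha>. \<alpha> m) ` F. D k x * t ^ k) = (\<Sum>k\<in>(\<lambda>\<alpha>. \<alpha> m) ` F. D k (x(m := t)) * (x(m := t)) m ^ k)"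
          using Dx by simp
        also have "\<dots> = (\<Sum>\<alpha>\<in>F. c \<alpha> * (\<Prod>l<Suc m. (x(m := t)) l ^ \<alpha> l))" by (rule grp[symmetric])
        also have "\<dots> = 0" using Suc.prems(3) by blast
        finally show "(\<Sum>k\<in>(\<lambda>\<alpha>. \<alpha> m) ` F. D k x * t ^ k) = 0" .
      qed
      then show ?thesis using univ_zero[of "(\<lambda>\<alpha>. \<alpha> m) ` F" "\<lambda>k. D k x"] Suc.prems(1) a0 by auto
    qed
    have "\<forall>\<alpha>\<in>Fk (\<alpha>0 m). c \<alpha> = 0"
    proof (rule Suc.IH)
      show "finite (Fk (\<alpha>0 m))" using Suc.prems(1) by (simp add: Fk_def)
      show "\<forall>\<alpha>\<in>Fk (\<alpha>0 m). \<forall>\<beta>\<in>Fk (\<alpha>0 m). (\<forall>l<m. \<alpha> l = \<beta> l) \<longrightarrow> \<alpha> = \<beta>"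
      proof (intro ballI impI)
        fix \<alpha> \<beta> assume "\<alpha> \<in> Fk (\<alpha>0 m)" "\<beta> \<in> Fk (\<alpha>0 m)" "\<forall>l<m. \<alpha> l = \<beta> l"
        then have "\<alpha> \<in> F" "\<beta> \<in> F" "\<forall>l<Suc m. \<alpha> l = \<beta> l"
          by (auto simp: Fk_def less_Suc_eq)
        then show "\<alpha> = \<beta>" using Suc.prems(2) by blast
      qed
      show "\<forall>x::nat\<Rightarrow>real. (\<Sum>\<alpha>\<in>Fk (\<alpha>0 m). c \<alpha> * (\<Prod>l<m. x l ^ \<alpha> l)) = 0"
        using Dz unfolding D_def by blast
    qed
    then show "c \<alpha>0 = 0" using a0 by (simp add: Fk_def)
  qed
qed

lemma mon_indep:
  assumes "\<forall>x::nat \<Rightarrow> real. (\<Sum>b\<le>kdim n d. c b * mon n d b x) = 0" "b \<le> kdim n d"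
  shows "c b = 0"
proof -
  have "\<forall>\<alpha>\<in>exps n d. c (rk n d \<alpha>) = 0"
  proof (rule mv_zero[where m = "Suc n"])
    show "finite (exps n d)" by (rule finite_exps)
    show "\<forall>\<alpha>\<in>exps n d. \<forall>\<beta>\<in>exps n d. (\<forall>l<Suc n. \<alpha> l = \<beta> l) \<longrightarrow> \<alpha> = \<beta>"
      using exps_eqI by (metis less_Suc_eq_le)
    show "\<forall>x::nat\<Rightarrow>real. (\<Sum>\<alpha>\<in>exps n d. c (rk n d \<alpha>) * (\<Prod>l<Suc n. x l ^ \<alpha> l)) = 0"
    proof
      fix x :: "nat \<Rightarrow> real"
      have "(\<Sum>\<alpha>\<in>exps n d. c (rk n d \<alpha>) * (\<Prod>l<Suc n. x l ^ \<alpha> l)) =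
            (\<Sum>b\<in>{..kdim n d}. c (rk n d (mon_exp n d b)) * (\<Prod>l<Suc n. x l ^ mon_exp n d b l))"
        using sum.reindex_bij_betw[OF mon_exp_bij[of n d], of "\<lambda>\<alpha>. c (rk n d \<alpha>) * (\<Prod>l<Suc n. x l ^ \<alpha> l)"]
        by simp
      also have "\<dots> = (\<Sum>b\<le>kdim n d. c b * mon n d b x)"
        by (intro sum.cong refl) (simp add: mon_exp_in(2) mon_def lessThan_Suc_atMost)
      finally show "(\<Sum>\<alpha>\<in>exps n d. c (rk n d \<alpha>) * (\<Prod>l<Suc n. x l ^ \<alpha> l)) = 0"
        using assms(1) by simp
    qed
  qed
  then show ?thesis using mon_exp_in[OF assms(2)] by metis
qed

lemma V_zero: "z \<in> Vreal n d i \<Longrightarrow> kdim n d < l \<Longrightarrow> z l = 0"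
  by (auto simp: Vreal_def)

lemma V_nz: "z \<in> Vreal n d i \<Longrightarrow> \<exists>l\<le>kdim n d. z l \<noteq> 0"
  by (auto simp: Vreal_def)

lemma mon_of_real: "mon n d l (\<lambda>j. complex_of_real (x j)) = complex_of_real (mon n d l x)"
  by (simp add: mon_def)

lemma V_real_point:
  assumes "\<forall>l>kdim n d. z l = 0" "\<exists>l\<le>kdim n d. z l \<noteq> 0" "\<forall>l\<le>n+i. z l = mon n d l (x::nat\<Rightarrow>real)"
  shows "z \<in> Vreal n d i"
proof -
  have "(\<lambda>l. complex_of_real (z l)) \<in> Hcone n d i"
    unfolding Hcone_def using assms
    by (auto intro!: exI[of _ "\<lambda>j. complex_of_real (x j)"] simp: mon_of_real)
  then show ?thesis using assms unfolding Vreal_def by blast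
qed

definition qcoef :: "nat \<Rightarrow> (nat \<Rightarrow> nat \<Rightarrow> real) \<Rightarrow> (nat \<Rightarrow> nat) \<Rightarrow> complex" where
  "qcoef K A \<beta> = (\<Sum>(a,b)\<in>{(a,b). a \<le> K \<and> b \<le> K \<and>
      (\<lambda>l. (if l = a then 1 else 0) + (if l = b then 1 else 0)) = \<beta>}. complex_of_real (A a b))"

lemma prod_delta_pow:
  fixes w :: "nat \<Rightarrow> 'a::comm_monoid_mult"
  assumes "a \<le> K"
  shows "(\<Prod>l\<le>K. w l ^ (if l = a then 1 else 0)) = w a"
proof -
  have "(\<Prod>l\<le>K. w l ^ (if l = a then 1 else 0)) = (\<Prod>l\<le>K. if l = a then w l else 1)"
    by (intro prod.cong refl) simp
  also have "\<dots> = w a" using assms by (simp add: prod.delta)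
  finally show ?thesis .
qed

lemma hp_q:
  fixes w :: "nat \<Rightarrow> complex"
  shows "hpeval K 2 (qcoef K A) w = (\<Sum>a\<le>K. \<Sum>b\<le>K. w a * complex_of_real (A a b) * w b)"
proof -
  let ?S = "{..K}\<times>{..K}"
  let ?h = "\<lambda>(a::nat,b::nat). \<lambda>l::nat. (if l = a then 1 else 0) + (if l = b then (1::nat) else 0)"
  let ?g = "\<lambda>p. complex_of_real (A (fst p) (snd p)) * (\<Prod>l\<le>K. w l ^ ?h p l)"
  have hS: "?h ` ?S \<subseteq> exps K 2"
  proof
    fix \<beta> assume "\<beta> \<in> ?h ` ?S"
    then obtain a b where ab: "a \<le> K" "b \<le> K" "\<beta> = ?h (a,b)" by auto
    have "(\<Sum>l\<le>K. \<beta> l) = (\<Sum>l\<le>K. (if l = a then 1 else 0)) + (\<Sum>l\<le>K. (if l = b then 1 else 0))"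
      unfolding ab(3) by (simp add: sum.distrib)
    also have "\<dots> = 2" using ab(1,2) by simp
    finally show "\<beta> \<in> exps K 2" using ab unfolding exps_def by auto
  qed
  have "(\<Sum>a\<le>K. \<Sum>b\<le>K. w a * complex_of_real (A a b) * w b) = (\<Sum>a\<le>K. \<Sum>b\<le>K. ?g (a,b))"
  proof (intro sum.cong refl)
    fix a b assume "a \<in> {..K}" "b \<in> {..K}"
    then have "(\<Prod>l\<le>K. w l ^ ?h (a,b) l) = w a * w b"
      by (simp add: power_add prod.distrib prod_delta_pow)
    then show "w a * complex_of_real (A a b) * w b = ?g (a,b)" by simp
  qed
  also have "\<dots> = (\<Sum>p\<in>?S. ?g p)" by (simp add: sum.cartesian_product case_prod_unfold)
  also have "\<dots> = (\<Sum>\<beta>\<in>?h ` ?S. \<Sum>p\<in>{p\<in>?S. ?h p = \<beta>}. ?g p)"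
    by (rule sum.image_gen) simp
  also have "\<dots> = (\<Sum>\<beta>\<in>?h ` ?S. qcoef K A \<beta> * (\<Prod>l\<le>K. w l ^ \<beta> l))"
  proof (intro sum.cong refl)
    fix \<beta>
    have e: "{p\<in>?S. ?h p = \<beta>} = {(a,b). a \<le> K \<and> b \<le> K \<and> (\<lambda>l. (if l = a then 1 else 0) + (if l = b then 1 else 0)) = \<beta>}"
      by auto
    have "(\<Sum>p\<in>{p\<in>?S. ?h p = \<beta>}. ?g p) = (\<Sum>p\<in>{p\<in>?S. ?h p = \<beta>}. complex_of_real (A (fst p) (snd p)) * (\<Prod>l\<le>K. w l ^ \<beta> l))"
      by (intro sum.cong refl) auto
    also have "\<dots> = (\<Sum>p\<in>{p\<in>?S. ?h p = \<beta>}. complex_of_real (A (fst p) (snd p))) * (\<Prod>l\<le>K. w l ^ \<beta> l)"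
      by (simp add: sum_distrib_right)
    also have "(\<Sum>p\<in>{p\<in>?S. ?h p = \<beta>}. complex_of_real (A (fst p) (snd p))) = qcoef K A \<beta>"
      unfolding qcoef_def e by (intro sum.cong refl) auto
    finally show "(\<Sum>p\<in>{p\<in>?S. ?h p = \<beta>}. ?g p) = qcoef K A \<beta> * (\<Prod>l\<le>K. w l ^ \<beta> l)" .
  qed
  also have "\<dots> = (\<Sum>\<beta>\<in>exps K 2. qcoef K A \<beta> * (\<Prod>l\<le>K. w l ^ \<beta> l))"
  proof (rule sum.mono_neutral_left[OF finite_exps hS], intro ballI)
    fix \<beta> assume "\<beta> \<in> exps K 2 - ?h ` ?S"
    then have e: "{(a,b). a \<le> K \<and> b \<le> K \<and> (\<lambda>l. (if l = a then 1 else 0) + (if l = b then 1 else 0)) = \<beta>} = {}"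
      by auto
    show "qcoef K A \<beta> * (\<Prod>l\<le>K. w l ^ \<beta> l) = 0" unfolding qcoef_def e by simp
  qed
  finally show ?thesis unfolding hpeval_def by simp
qed

lemma hp_q_real: "hpeval K 2 (qcoef K A) (\<lambda>l. complex_of_real (z l)) = complex_of_real (qform K A z)"
  unfolding hp_q qform_def by simp

lemma qform_cong: "(\<And>l. l \<le> K \<Longrightarrow> z l = z' l) \<Longrightarrow> qform K A z = qform K A z'"
  unfolding qform_def by (intro sum.cong refl) auto

lemma qform_pert:
  assumes j: "j \<le> K" and sym: "\<forall>a b. A a b = A b a"
  shows "qform K A (\<lambda>l. m l + (if l = j then t else 0)) =
         qform K A m + 2 * t * (\<Sum>b\<le>K. A j b * m b) + t^2 * A j j"
proof -
  define \<delta> where "\<delta> = (\<lambda>l. if l = j then t else (0::real))"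
  define c where "c = (\<Sum>b\<le>K. A j b * m b)"
  have "qform K A (\<lambda>l. m l + \<delta> l) =
        (\<Sum>a\<le>K. \<Sum>b\<le>K. m a * A a b * m b + \<delta> a * A a b * m b + m a * A a b * \<delta> b + \<delta> a * A a b * \<delta> b)"
    unfolding qform_def by (intro sum.cong refl) (simp add: algebra_simps)
  also have "\<dots> = qform K A m + (\<Sum>a\<le>K. \<Sum>b\<le>K. \<delta> a * A a b * m b) + (\<Sum>a\<le>K. \<Sum>b\<le>K. m a * A a b * \<delta> b)
        + (\<Sum>a\<le>K. \<Sum>b\<le>K. \<delta> a * A a b * \<delta> b)"
    unfolding qform_def by (simp add: sum.distrib)
  also have "(\<Sum>a\<le>K. \<Sum>b\<le>K. \<delta> a * A a b * m b) = t * c"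
  proof -
    have "(\<Sum>a\<le>K. \<Sum>b\<le>K. \<delta> a * A a b * m b) = (\<Sum>a\<le>K. if a = j then t * c else 0)"
    proof (intro sum.cong refl)
      fix a show "(\<Sum>b\<le>K. \<delta> a * A a b * m b) = (if a = j then t * c else 0)"
        by (cases "a = j") (simp_all add: \<delta>_def c_def sum_distrib_left mult.assoc)
    qed
    also have "\<dots> = t * c" using j by simp
    finally show ?thesis .
  qed
  also have "(\<Sum>a\<le>K. \<Sum>b\<le>K. m a * A a b * \<delta> b) = t * c"
  proof -
    have "(\<Sum>a\<le>K. \<Sum>b\<le>K. m a * A a b * \<delta> b) = (\<Sum>a\<le>K. t * (A j a * m a))"
    proof (intro sum.cong refl)
      fix a
      have "(\<Sum>b\<le>K. m a * A a b * \<delta> b) = (\<Sum>b\<le>K. if b = j then m a * A a j * t else 0)"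
        by (intro sum.cong refl) (simp add: \<delta>_def)
      also have "\<dots> = m a * A a j * t" using j by simp
      also have "\<dots> = t * (A j a * m a)" using sym by (simp add: mult_ac)
      finally show "(\<Sum>b\<le>K. m a * A a b * \<delta> b) = t * (A j a * m a)" .
    qed
    also have "\<dots> = t * c" by (simp add: c_def sum_distrib_left)
    finally show ?thesis .
  qed
  also have "(\<Sum>a\<le>K. \<Sum>b\<le>K. \<delta> a * A a b * \<delta> b) = t^2 * A j j"
  proof -
    have "(\<Sum>a\<le>K. \<Sum>b\<le>K. \<delta> a * A a b * \<delta> b) = (\<Sum>a\<le>K. if a = j then t^2 * A j j else 0)"
    proof (intro sum.cong refl)
      fix a
      have "(\<Sum>b\<le>K. \<delta> a * A a b * \<delta> b) = (\<Sum>b\<le>K. if b = j then \<delta> a * A a j * t else 0)"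
        by (intro sum.cong refl) (simp add: \<delta>_def)
      also have "\<dots> = \<delta> a * A a j * t" using j by simp
      also have "\<dots> = (if a = j then t^2 * A j j else 0)" by (simp add: \<delta>_def power2_eq_square)
      finally show "(\<Sum>b\<le>K. \<delta> a * A a b * \<delta> b) = (if a = j then t^2 * A j j else 0)" .
    qed
    also have "\<dots> = t^2 * A j j" using j by simp
    finally show ?thesis .
  qed
  finally show ?thesis unfolding \<delta>_def c_def by simp
qed

lemma quad_nonneg_zero:
  fixes a c :: real
  assumes "\<forall>t. 0 \<le> 2*t*c + t^2*a"
  shows "c = 0"
proof (rule ccontr)
  assume "c \<noteq> 0"
  define s where "s = 1 / (\<bar>a\<bar> + 1)"
  have s: "0 < s" "s * \<bar>a\<bar> < 1" unfolding s_def by (auto simp: field_simps)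
  have c2: "0 < c^2" using \<open>c \<noteq> 0\<close> by simp
  define t0 where "t0 = - (c * s)"
  have "0 \<le> 2*t0*c + t0^2*a" using assms by blast
  also have "\<dots> = c^2 * s * (s * a - 2)" by (simp add: t0_def power2_eq_square algebra_simps)
  also have "\<dots> < 0"
  proof -
    have "s * a - 2 < 0" using s by (smt (verit) abs_ge_self mult_left_mono)
    then show ?thesis using c2 s(1) by (simp add: mult_pos_neg)
  qed
  finally show False by simp
qed

lemma lineality:
  assumes A: "A \<in> symmat (kdim n d)" and G: "\<forall>\<gamma>. Gmap n d A \<gamma> = 0"
    and P: "\<forall>z\<in>Vreal n d i. qform (kdim n d) A z \<ge> 0"
  shows "\<forall>z\<in>Vreal n d i. qform (kdim n d) A z = 0"
proof -
  let ?K = "kdim n d"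
  have sym: "\<forall>a b. A a b = A b a" and out: "\<forall>a b. ?K < a \<or> ?K < b \<longrightarrow> A a b = 0"
    using A by (auto simp: symmat_def)
  have step1: "(\<Sum>b\<le>?K. A j b * mon n d b x) = 0" if j: "n + i < j" "j \<le> ?K" for j and x :: "nat \<Rightarrow> real"
  proof -
    define m where "m = (\<lambda>l. mon n d l x :: real)"
    have Q: "qform ?K A m = 0"
      using quad_zero[OF G, of x] unfolding qform_def m_def by simp
    have "0 \<le> 2*t*(\<Sum>b\<le>?K. A j b * m b) + t^2 * A j j" for t
    proof -
      define zt where "zt = (\<lambda>l. if l \<le> ?K then m l + (if l = j then t else 0) else 0)"
      have "0 \<le> qform ?K A zt"
      proof (cases "\<exists>l\<le>?K. zt l \<noteq> 0")
        case True
        have "zt \<in> Vreal n d i"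
        proof (rule V_real_point[where x = x])
          show "\<forall>l>?K. zt l = 0" by (simp add: zt_def)
          show "\<exists>l\<le>?K. zt l \<noteq> 0" by fact
          show "\<forall>l\<le>n+i. zt l = mon n d l x" using j by (auto simp: zt_def m_def)
        qed
        then show ?thesis using P by blast
      next
        case False
        then have "qform ?K A zt = qform ?K A (\<lambda>_. 0)" by (intro qform_cong) auto
        then show ?thesis by (simp add: qform_def)
      qed
      also have "qform ?K A zt = qform ?K A (\<lambda>l. m l + (if l = j then t else 0))"
        by (intro qform_cong) (simp add: zt_def)
      also have "\<dots> = 2 * t * (\<Sum>b\<le>?K. A j b * m b) + t^2 * A j j"
        using qform_pert[OF j(2) sym] Q by simp
      finally show ?thesis .
    qed
    then have "(\<Sum>b\<le>?K. A j b * m b) = 0" using quad_nonneg_zero by blast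
    then show ?thesis by (simp add: m_def)
  qed
  have zero: "A a b = 0" if "n + i < a \<or> n + i < b" for a b
  proof -
    have "A j b' = 0" if "n + i < j" "j \<le> ?K" "b' \<le> ?K" for j b'
    proof -
      have "\<forall>x::nat\<Rightarrow>real. (\<Sum>b\<le>?K. A j b * mon n d b x) = 0" using step1 that by blast
      then show ?thesis using mon_indep that(3) by blast
    qed
    then show ?thesis using that out sym by (metis not_le)
  qed
  have hc: "hpeval ?K 2 (qcoef ?K A) w = 0" if "w \<in> Hcone n d i" for w
  proof -
    have "\<exists>x::nat\<Rightarrow>complex. \<forall>l\<le>n+i. w l = mon n d l x"
      using that by (simp add: Hcone_def)
    then obtain x :: "nat \<Rightarrow> complex" where x: "\<forall>l\<le>n+i. w l = mon n d l x"
      by blast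
    have "hpeval ?K 2 (qcoef ?K A) w = (\<Sum>a\<le>?K. \<Sum>b\<le>?K. w a * complex_of_real (A a b) * w b)"
      by (rule hp_q)
    also have "\<dots> = (\<Sum>a\<le>?K. \<Sum>b\<le>?K. mon n d a x * complex_of_real (A a b) * mon n d b x)"
    proof (intro sum.cong refl)
      fix a b
      show "w a * complex_of_real (A a b) * w b = mon n d a x * complex_of_real (A a b) * mon n d b x"
      proof (cases "n + i < a \<or> n + i < b")
        case True then show ?thesis using zero by simp
      next
        case False then show ?thesis using x by simp
      qed
    qed
    also have "\<dots> = 0" by (rule quad_zero[OF G])
    finally show ?thesis .
  qed
  show ?thesis
  proof
    fix z assume z: "z \<in> Vreal n d i"
    have "hpeval ?K 2 (qcoef ?K A) (\<lambda>l. complex_of_real (z l)) = 0"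
      using z hc unfolding Vreal_def by blast
    then show "qform ?K A z = 0" unfolding hp_q_real by simp
  qed
qed

lemma bw_finite:
  fixes x :: "nat \<Rightarrow> 'i \<Rightarrow> real"
  assumes "finite I" "\<forall>m. \<forall>j\<in>I. \<bar>x m j\<bar> \<le> R"
  shows "\<exists>r y. strict_mono r \<and> (\<forall>j\<in>I. (\<lambda>m. x (r m) j) \<longlonglongrightarrow> y j)"
  using assms
proof (induction I rule: finite_induct)
  case empty
  show ?case by (rule exI[of _ id]) (auto simp: strict_mono_def)
next
  case (insert j I)
  obtain r1 y1 where r1: "strict_mono r1" "\<forall>j\<in>I. (\<lambda>m. x (r1 m) j) \<longlonglongrightarrow> y1 j"
    using insert.IH insert.prems by blast
  define s where "s = (\<lambda>m. x (r1 m) j)"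
  obtain f where f: "strict_mono f" "monoseq (\<lambda>m. s (f m))" using seq_monosub by blast
  have "Bseq (\<lambda>m. s (f m))"
    by (rule BseqI'[where K = R]) (use insert.prems in \<open>auto simp: s_def\<close>)
  then have "convergent (\<lambda>m. s (f m))" using f(2) Bseq_monoseq_convergent by blast
  then have c: "(\<lambda>m. s (f m)) \<longlonglongrightarrow> lim (\<lambda>m. s (f m))" using convergent_LIMSEQ_iff by blast
  show ?case
  proof (intro exI conjI)
    show "strict_mono (r1 \<circ> f)" using r1(1) f(1) by (rule strict_mono_o)
    show "\<forall>j'\<in>insert j I. (\<lambda>m. x ((r1 \<circ> f) m) j') \<longlonglongrightarrow> (y1(j := lim (\<lambda>m. s (f m)))) j'"
    proof
      fix j' assume "j' \<in> insert j I"
      then show "(\<lambda>m. x ((r1 \<circ> f) m) j') \<longlonglongrightarrow> (y1(j := lim (\<lambda>m. s (f m)))) j'"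
      proof
        assume "j' = j" then show ?thesis using c by (simp add: s_def o_def)
      next
        assume j': "j' \<in> I"
        then have "j' \<noteq> j" using insert.hyps by auto
        have "((\<lambda>m. x (r1 m) j') \<circ> f) \<longlonglongrightarrow> y1 j'"
          using LIMSEQ_subseq_LIMSEQ[OF r1(2)[rule_format, OF j'] f(1)] .
        then show ?thesis using \<open>j' \<noteq> j\<close> by (simp add: o_def)
      qed
    qed
  qed
qed

definition mnorm :: "nat \<Rightarrow> (nat \<Rightarrow> nat \<Rightarrow> real) \<Rightarrow> real" where
  "mnorm K A = (\<Sum>a\<le>K. \<Sum>b\<le>K. \<bar>A a b\<bar>)"

definition fnorm :: "nat \<Rightarrow> nat \<Rightarrow> ((nat \<Rightarrow> nat) \<Rightarrow> real) \<Rightarrow> real" where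
  "fnorm n d g = (\<Sum>\<gamma>\<in>exps n (2*d). \<bar>g \<gamma>\<bar>)"

definition vnorm :: "nat \<Rightarrow> (nat \<Rightarrow> real) \<Rightarrow> real" where
  "vnorm K z = (\<Sum>l\<le>K. (z l)^2)"

lemma mnorm_nonneg: "0 \<le> mnorm K A" unfolding mnorm_def by (intro sum_nonneg) auto
lemma fnorm_nonneg: "0 \<le> fnorm n d g" unfolding fnorm_def by (intro sum_nonneg) auto
lemma vnorm_nonneg: "0 \<le> vnorm K z" unfolding vnorm_def by (intro sum_nonneg) auto

lemma entry_le_mnorm: "a \<le> K \<Longrightarrow> b \<le> K \<Longrightarrow> \<bar>A a b\<bar> \<le> mnorm K A"
proof -
  assume ab: "a \<le> K" "b \<le> K"
  have "\<bar>A a b\<bar> \<le> (\<Sum>b'\<le>K. \<bar>A a b'\<bar>)"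
    using ab by (intro member_le_sum) auto
  also have "\<dots> \<le> (\<Sum>a'\<le>K. \<Sum>b'\<le>K. \<bar>A a' b'\<bar>)"
    using ab by (intro member_le_sum[of a _ "\<lambda>a'. \<Sum>b'\<le>K. \<bar>A a' b'\<bar>"]) (auto intro: sum_nonneg)
  finally show ?thesis unfolding mnorm_def .
qed

lemma coord_le_fnorm: "\<gamma> \<in> exps n (2*d) \<Longrightarrow> \<bar>g \<gamma>\<bar> \<le> fnorm n d g"
  unfolding fnorm_def by (intro member_le_sum) (auto simp: finite_exps)

lemma coord_le_vnorm: "l \<le> K \<Longrightarrow> (z l)^2 \<le> vnorm K z"
  unfolding vnorm_def by (intro member_le_sum) auto

lemma vnorm_pos: "\<exists>l\<le>K. z l \<noteq> 0 \<Longrightarrow> 0 < vnorm K z"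
proof -
  assume "\<exists>l\<le>K. z l \<noteq> 0"
  then obtain l where "l \<le> K" "z l \<noteq> 0" by blast
  then have "0 < (z l)^2" by simp
  also have "\<dots> \<le> vnorm K z" using \<open>l \<le> K\<close> by (rule coord_le_vnorm)
  finally show ?thesis .
qed

lemma qform_bound: "\<bar>qform K D z\<bar> \<le> mnorm K D * vnorm K z"
proof -
  have "\<bar>qform K D z\<bar> \<le> (\<Sum>a\<le>K. \<Sum>b\<le>K. \<bar>z a * D a b * z b\<bar>)"
    unfolding qform_def by (rule order_trans[OF sum_abs]) (intro sum_mono sum_abs)
  also have "\<dots> \<le> (\<Sum>a\<le>K. \<Sum>b\<le>K. \<bar>D a b\<bar> * vnorm K z)"
  proof (intro sum_mono)
    fix a b assume "a \<in> {..K}" "b \<in> {..K}"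
    then have "(z a)^2 \<le> vnorm K z" "(z b)^2 \<le> vnorm K z" by (auto intro: coord_le_vnorm)
    moreover have "2 * (\<bar>z a\<bar> * \<bar>z b\<bar>) \<le> (z a)^2 + (z b)^2"
    proof -
      have "0 \<le> (\<bar>z a\<bar> - \<bar>z b\<bar>)^2" by simp
      then show ?thesis by (simp add: power2_eq_square algebra_simps)
    qed
    ultimately have "\<bar>z a * z b\<bar> \<le> vnorm K z" by (simp add: abs_mult)
    then have "\<bar>D a b\<bar> * \<bar>z a * z b\<bar> \<le> \<bar>D a b\<bar> * vnorm K z" by (simp add: mult_left_mono)
    then show "\<bar>z a * D a b * z b\<bar> \<le> \<bar>D a b\<bar> * vnorm K z" by (simp add: abs_mult mult_ac)
  qed
  also have "\<dots> = mnorm K D * vnorm K z" unfolding mnorm_def by (simp add: sum_distrib_right)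
  finally show ?thesis .
qed

lemma qform_add: "qform K (\<lambda>a b. A a b + c * B a b) z = qform K A z + c * qform K B z"
proof -
  have "qform K (\<lambda>a b. A a b + c * B a b) z = (\<Sum>a\<le>K. \<Sum>b\<le>K. z a * A a b * z b + c * (z a * B a b * z b))"
    unfolding qform_def by (intro sum.cong refl) (simp add: algebra_simps)
  also have "\<dots> = qform K A z + c * qform K B z"
    unfolding qform_def by (simp add: sum.distrib sum_distrib_left)
  finally show ?thesis .
qed

lemma qform_scale: "qform K A (\<lambda>l. t * z l) = t^2 * qform K A z"
  unfolding qform_def by (simp add: sum_distrib_left power2_eq_square mult_ac)

lemma hpeval_scale:
  assumes "\<forall>l>K. z l = 0"
  shows "hpeval K e p (\<lambda>l. t * z l) = t^e * hpeval K e p z"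
proof -
  have "hpeval K e p (\<lambda>l. t * z l) = (\<Sum>\<beta>\<in>exps K e. p \<beta> * (t^e * (\<Prod>l\<le>K. z l ^ \<beta> l)))"
    unfolding hpeval_def
  proof (intro sum.cong refl)
    fix \<beta> assume b: "\<beta> \<in> exps K e"
    have "(\<Prod>l\<le>K. (t * z l) ^ \<beta> l) = (\<Prod>l\<le>K. t ^ \<beta> l) * (\<Prod>l\<le>K. z l ^ \<beta> l)"
      by (simp add: power_mult_distrib prod.distrib)
    also have "(\<Prod>l\<le>K. t ^ \<beta> l) = t ^ e" using exps_sum[OF b] by (metis power_sum)
    finally show "p \<beta> * (\<Prod>l\<le>K. (t * z l) ^ \<beta> l) = p \<beta> * (t^e * (\<Prod>l\<le>K. z l ^ \<beta> l))" by simp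
  qed
  also have "\<dots> = t^e * hpeval K e p z" unfolding hpeval_def by (simp add: sum_distrib_left mult_ac)
  finally show ?thesis .
qed

lemma V_scale:
  assumes z: "z \<in> Vreal n d i" and t: "t \<noteq> 0"
  shows "(\<lambda>l. t * z l) \<in> Vreal n d i"
  unfolding Vreal_def
proof (intro CollectI conjI allI impI)
  fix l assume "kdim n d < l" then show "t * z l = 0" using V_zero[OF z] by simp
next
  show "\<exists>l\<le>kdim n d. t * z l \<noteq> 0" using V_nz[OF z] t by auto
next
  fix e p assume h: "\<forall>w\<in>Hcone n d i. hpeval (kdim n d) e p w = 0"
  have "hpeval (kdim n d) e p (\<lambda>l. complex_of_real (t * z l)) =
        complex_of_real t ^ e * hpeval (kdim n d) e p (\<lambda>l. complex_of_real (z l))"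
    using hpeval_scale[of "kdim n d" "\<lambda>l. complex_of_real (z l)" e p "complex_of_real t"] V_zero[OF z]
    by simp
  also have "hpeval (kdim n d) e p (\<lambda>l. complex_of_real (z l)) = 0"
    using z h unfolding Vreal_def by blast
  finally show "hpeval (kdim n d) e p (\<lambda>l. complex_of_real (t * z l)) = 0" by simp
qed

lemma V_limit:
  assumes zm: "\<forall>m. z m \<in> Vreal n d i" and lim: "\<forall>l\<le>kdim n d. (\<lambda>m. z m l) \<longlonglongrightarrow> w l"
    and w0: "\<forall>l>kdim n d. w l = 0" and wnz: "\<exists>l\<le>kdim n d. w l \<noteq> 0"
  shows "w \<in> Vreal n d i"
  unfolding Vreal_def
proof (intro CollectI conjI allI impI)
  fix l assume "kdim n d < l" then show "w l = 0" using w0 by simp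
next
  show "\<exists>l\<le>kdim n d. w l \<noteq> 0" by fact
next
  fix e p assume h: "\<forall>v\<in>Hcone n d i. hpeval (kdim n d) e p v = 0"
  have "(\<lambda>m. \<Sum>\<beta>\<in>exps (kdim n d) e. p \<beta> * (\<Prod>l\<le>kdim n d. complex_of_real (z m l) ^ \<beta> l)) \<longlonglongrightarrow>
        (\<Sum>\<beta>\<in>exps (kdim n d) e. p \<beta> * (\<Prod>l\<le>kdim n d. complex_of_real (w l) ^ \<beta> l))"
  proof (rule tendsto_sum)
    fix \<beta> show "(\<lambda>m. p \<beta> * (\<Prod>l\<le>kdim n d. complex_of_real (z m l) ^ \<beta> l)) \<longlonglongrightarrow>
                 p \<beta> * (\<Prod>l\<le>kdim n d. complex_of_real (w l) ^ \<beta> l)"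
    proof (rule tendsto_mult[OF tendsto_const], rule tendsto_prod)
      fix l assume "l \<in> {..kdim n d}"
      then have "(\<lambda>m. z m l) \<longlonglongrightarrow> w l" using lim by simp
      then show "(\<lambda>m. complex_of_real (z m l) ^ \<beta> l) \<longlonglongrightarrow> complex_of_real (w l) ^ \<beta> l"
        by (intro tendsto_power tendsto_of_real)
    qed
  qed
  then have t: "(\<lambda>m. hpeval (kdim n d) e p (\<lambda>l. complex_of_real (z m l))) \<longlonglongrightarrow>
        hpeval (kdim n d) e p (\<lambda>l. complex_of_real (w l))"
    unfolding hpeval_def .
  have "(\<lambda>m. hpeval (kdim n d) e p (\<lambda>l. complex_of_real (z m l))) = (\<lambda>m. 0)"
  proof
    fix m show "hpeval (kdim n d) e p (\<lambda>l. complex_of_real (z m l)) = 0"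
      using zm h unfolding Vreal_def by blast
  qed
  then have "(\<lambda>m. 0::complex) \<longlonglongrightarrow> hpeval (kdim n d) e p (\<lambda>l. complex_of_real (w l))"
    using t by simp
  then show "hpeval (kdim n d) e p (\<lambda>l. complex_of_real (w l)) = 0"
    using LIMSEQ_const_iff by metis
qed

lemma qform_tendsto_A:
  assumes "\<forall>a\<le>K. \<forall>b\<le>K. (\<lambda>m. A m a b) \<longlonglongrightarrow> B a b"
  shows "(\<lambda>m. qform K (A m) z) \<longlonglongrightarrow> qform K B z"
  unfolding qform_def by (intro tendsto_intros) (use assms in auto)

lemma qform_tendsto_z:
  assumes "\<forall>l\<le>K. (\<lambda>m. z m l) \<longlonglongrightarrow> w l"
  shows "(\<lambda>m. qform K A (z m)) \<longlonglongrightarrow> qform K A w"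
  unfolding qform_def by (intro tendsto_intros) (use assms in auto)

lemma vnorm_tendsto:
  assumes "\<forall>l\<le>K. (\<lambda>m. z m l) \<longlonglongrightarrow> w l"
  shows "(\<lambda>m. vnorm K (z m)) \<longlonglongrightarrow> vnorm K w"
  unfolding vnorm_def
proof (rule tendsto_sum)
  fix l assume "l \<in> {..K}"
  then show "(\<lambda>m. (z m l)^2) \<longlonglongrightarrow> (w l)^2" using assms by (intro tendsto_power) simp
qed

lemma Gmap_tendsto:
  assumes "\<forall>a\<le>kdim n d. \<forall>b\<le>kdim n d. (\<lambda>m. A m a b) \<longlonglongrightarrow> B a b"
  shows "(\<lambda>m. Gmap n d (A m) \<gamma>) \<longlonglongrightarrow> Gmap n d B \<gamma>"
  unfolding Gmap_def
proof (rule tendsto_sum)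
  fix p assume "p \<in> {(a,b). a \<le> kdim n d \<and> b \<le> kdim n d \<and> (\<lambda>l. mon_exp n d a l + mon_exp n d b l) = \<gamma>}"
  then obtain a b where "p = (a,b)" "a \<le> kdim n d" "b \<le> kdim n d" by blast
  then show "(\<lambda>m. case p of (a,b) \<Rightarrow> A m a b) \<longlonglongrightarrow> (case p of (a,b) \<Rightarrow> B a b)"
    using assms by simp
qed

lemma mnorm_tendsto:
  assumes "\<forall>a\<le>K. \<forall>b\<le>K. (\<lambda>m. A m a b) \<longlonglongrightarrow> B a b"
  shows "(\<lambda>m. mnorm K (A m)) \<longlonglongrightarrow> mnorm K B"
  unfolding mnorm_def
proof (intro tendsto_sum)
  fix a b assume "a \<in> {..K}" "b \<in> {..K}"
  then show "(\<lambda>m. \<bar>A m a b\<bar>) \<longlonglongrightarrow> \<bar>B a b\<bar>" using assms by (intro tendsto_rabs) simp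
qed

definition Pset :: "nat \<Rightarrow> nat \<Rightarrow> nat \<Rightarrow> (nat \<Rightarrow> nat \<Rightarrow> real) set" where
  "Pset n d i = {A \<in> symmat (kdim n d). \<forall>z\<in>Vreal n d i. 0 \<le> qform (kdim n d) A z}"

lemma Ccone_Pset: "Ccone n d i = {f \<in> forms n (2*d). \<exists>A\<in>Pset n d i. Gmap n d A = f}"
  unfolding Ccone_def Pset_def by blast

lemma symmat_lin: "A \<in> symmat K \<Longrightarrow> B \<in> symmat K \<Longrightarrow> (\<lambda>a b. A a b + c * B a b) \<in> symmat K"
  unfolding symmat_def by auto

lemma symmat_zero: "(\<lambda>a b. 0) \<in> symmat K"
  unfolding symmat_def by auto

lemma symmat_scale: "B \<in> symmat K \<Longrightarrow> (\<lambda>a b. c * B a b) \<in> symmat K"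
  using symmat_lin[OF symmat_zero, of B K c] by simp

lemma qform_zero: "qform K (\<lambda>a b. 0) z = 0"
  unfolding qform_def by simp

lemma qform_scale_A: "qform K (\<lambda>a b. c * B a b) z = c * qform K B z"
  using qform_add[of K "\<lambda>a b. 0" c B z] by (simp add: qform_zero)

lemma Pset_lin: "A \<in> Pset n d i \<Longrightarrow> B \<in> Pset n d i \<Longrightarrow> 0 \<le> c \<Longrightarrow> (\<lambda>a b. A a b + c * B a b) \<in> Pset n d i"
  unfolding Pset_def by (auto simp: symmat_lin qform_add)

lemma Pset_zero: "(\<lambda>a b. 0) \<in> Pset n d i"
  unfolding Pset_def by (simp add: symmat_zero qform_zero)

lemma Pset_scale: "B \<in> Pset n d i \<Longrightarrow> 0 \<le> c \<Longrightarrow> (\<lambda>a b. c * B a b) \<in> Pset n d i"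
  using Pset_lin[OF Pset_zero, of B n d i c] by simp

lemma mnorm_scale: "mnorm K (\<lambda>a b. c * B a b) = \<bar>c\<bar> * mnorm K B"
  unfolding mnorm_def by (simp add: abs_mult sum_distrib_left)

lemma fnorm_scale: "fnorm n d (\<lambda>\<gamma>. c * g \<gamma>) = \<bar>c\<bar> * fnorm n d g"
  unfolding fnorm_def by (simp add: abs_mult sum_distrib_left)

lemma vnorm_scale: "vnorm K (\<lambda>l. t * z l) = t^2 * vnorm K z"
  unfolding vnorm_def by (simp add: power_mult_distrib sum_distrib_left)

lemma lim_symmat:
  assumes "\<forall>m. C m \<in> symmat K" "\<forall>a\<le>K. \<forall>b\<le>K. (\<lambda>m. C m a b) \<longlonglongrightarrow> As a b"
    "\<forall>a b. K < a \<or> K < b \<longrightarrow> As a b = 0"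
  shows "As \<in> symmat K"
  unfolding symmat_def
proof (intro CollectI conjI allI impI)
  fix a b
  show "As a b = As b a"
  proof (cases "a \<le> K \<and> b \<le> K")
    case True
    have "(\<lambda>m. C m a b) = (\<lambda>m. C m b a)" using assms(1) by (auto simp: symmat_def)
    then have "(\<lambda>m. C m b a) \<longlonglongrightarrow> As a b" using assms(2) True by metis
    moreover have "(\<lambda>m. C m b a) \<longlonglongrightarrow> As b a" using assms(2) True by blast
    ultimately show ?thesis using LIMSEQ_unique by blast
  next
    case False then show ?thesis using assms(3) by (metis not_le)
  qed
next
  fix a b assume "K < a \<or> K < b" then show "As a b = 0" using assms(3) by blast
qed

lemma lim_Pset:
  assumes "\<forall>m. C m \<in> Pset n d i" "\<forall>a\<le>kdim n d. \<forall>b\<le>kdim n d. (\<lambda>m. C m a b) \<longlonglongrightarrow> As a b"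
    "\<forall>a b. kdim n d < a \<or> kdim n d < b \<longrightarrow> As a b = 0"
  shows "As \<in> Pset n d i"
proof -
  have "As \<in> symmat (kdim n d)"
    using lim_symmat[of C "kdim n d" As] assms by (auto simp: Pset_def)
  moreover have "0 \<le> qform (kdim n d) As z" if z: "z \<in> Vreal n d i" for z
  proof (rule LIMSEQ_le_const)
    show "(\<lambda>m. qform (kdim n d) (C m) z) \<longlonglongrightarrow> qform (kdim n d) As z"
      using assms(2) by (rule qform_tendsto_A)
    show "\<exists>N. \<forall>m\<ge>N. 0 \<le> qform (kdim n d) (C m) z" using assms(1) z by (auto simp: Pset_def)
  qed
  ultimately show ?thesis by (simp add: Pset_def)
qed

lemma bw_matrix:
  fixes C :: "nat \<Rightarrow> nat \<Rightarrow> nat \<Rightarrow> real"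
  assumes "\<forall>m. \<forall>a\<le>K. \<forall>b\<le>K. \<bar>C m a b\<bar> \<le> R"
  shows "\<exists>r As. strict_mono r \<and> (\<forall>a\<le>K. \<forall>b\<le>K. (\<lambda>m. C (r m) a b) \<longlonglongrightarrow> As a b) \<and>
     (\<forall>a b. K < a \<or> K < b \<longrightarrow> As a b = 0)"
proof -
  obtain r y where r: "strict_mono r" "\<forall>j\<in>{..K}\<times>{..K}. (\<lambda>m. (\<lambda>(a,b). C (r m) a b) j) \<longlonglongrightarrow> y j"
    using bw_finite[of "{..K}\<times>{..K}" "\<lambda>m (a,b). C m a b" R] assms by auto
  define As where "As = (\<lambda>a b. if a \<le> K \<and> b \<le> K then y (a,b) else 0)"
  show ?thesis
  proof (intro exI conjI allI impI)
    show "strict_mono r" by fact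
    fix a b assume "a \<le> K" "b \<le> K"
    then show "(\<lambda>m. C (r m) a b) \<longlonglongrightarrow> As a b" using r(2) by (auto simp: As_def)
  next
    fix a b assume "K < a \<or> K < b" then show "As a b = 0" by (auto simp: As_def)
  qed
qed

lemma bw_vec:
  fixes z :: "nat \<Rightarrow> nat \<Rightarrow> real"
  assumes "\<forall>m. \<forall>l\<le>K. \<bar>z m l\<bar> \<le> R"
  shows "\<exists>r w. strict_mono r \<and> (\<forall>l\<le>K. (\<lambda>m. z (r m) l) \<longlonglongrightarrow> w l) \<and> (\<forall>l>K. w l = 0)"
proof -
  obtain r y where r: "strict_mono r" "\<forall>j\<in>{..K}. (\<lambda>m. z (r m) j) \<longlonglongrightarrow> y j"
    using bw_finite[of "{..K}" z R] assms by auto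
  show ?thesis
    by (rule exI[of _ r], rule exI[of _ "\<lambda>l. if l \<le> K then y l else 0"]) (use r in auto)
qed

lemma inv_Suc_tendsto_sub:
  assumes "strict_mono r"
  shows "(\<lambda>m. inverse (real (Suc (r m)))) \<longlonglongrightarrow> 0"
  using LIMSEQ_subseq_LIMSEQ[OF LIMSEQ_inverse_real_of_nat assms] by (simp add: o_def)

lemma coercive:
  assumes pos: "\<forall>z\<in>Vreal n d i. 0 < qform (kdim n d) A z"
  shows "\<exists>c>0. \<forall>z\<in>Vreal n d i. c * vnorm (kdim n d) z \<le> qform (kdim n d) A z"
proof (rule ccontr)
  let ?K = "kdim n d"
  assume "\<not> ?thesis"
  then have "\<forall>m::nat. \<exists>z\<in>Vreal n d i. qform ?K A z < inverse (real (Suc m)) * vnorm ?K z"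
    by (metis not_le inverse_positive_iff_positive of_nat_0_less_iff zero_less_Suc)
  then obtain z where z: "\<And>m. z m \<in> Vreal n d i" "\<And>m. qform ?K A (z m) < inverse (real (Suc m)) * vnorm ?K (z m)"
    by metis
  define s where "s = (\<lambda>m. 1 / sqrt (vnorm ?K (z m)))"
  define w where "w = (\<lambda>m l. s m * z m l)"
  have vpos: "0 < vnorm ?K (z m)" for m using V_nz[OF z(1)] vnorm_pos by blast
  have s2: "(s m)^2 * vnorm ?K (z m) = 1" for m
    using vpos[of m] by (simp add: s_def power_divide)
  have wV: "w m \<in> Vreal n d i" for m
  proof -
    have "s m \<noteq> 0" using vpos[of m] by (simp add: s_def)
    then show ?thesis unfolding w_def by (rule V_scale[OF z(1)])
  qed
  have wn: "vnorm ?K (w m) = 1" for m unfolding w_def vnorm_scale using s2 by simp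
  have wq: "qform ?K A (w m) < inverse (real (Suc m))" for m
  proof -
    have "qform ?K A (w m) = (s m)^2 * qform ?K A (z m)" unfolding w_def by (rule qform_scale)
    also have "\<dots> < (s m)^2 * (inverse (real (Suc m)) * vnorm ?K (z m))"
      using z(2)[of m] vpos[of m] by (intro mult_strict_left_mono) (auto simp: s_def)
    also have "\<dots> = inverse (real (Suc m))" using s2[of m] by (simp add: mult_ac)
    finally show ?thesis .
  qed
  have wb: "\<forall>m. \<forall>l\<le>?K. \<bar>w m l\<bar> \<le> 1"
  proof (intro allI impI)
    fix m l assume "l \<le> ?K"
    then have "(w m l)^2 \<le> 1" using coord_le_vnorm[of l ?K "w m"] wn[of m] by simp
    then show "\<bar>w m l\<bar> \<le> 1" by (simp add: abs_square_le_1)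
  qed
  obtain r ws where r: "strict_mono r" "\<forall>l\<le>?K. (\<lambda>m. w (r m) l) \<longlonglongrightarrow> ws l" "\<forall>l>?K. ws l = 0"
    using bw_vec[OF wb] by blast
  have "(\<lambda>m. vnorm ?K (w (r m))) \<longlonglongrightarrow> vnorm ?K ws" using r(2) by (rule vnorm_tendsto)
  then have "vnorm ?K ws = 1" using wn by (simp add: LIMSEQ_const_iff)
  then have wsnz: "\<exists>l\<le>?K. ws l \<noteq> 0"
    by (metis (no_types, lifting) vnorm_def power_zero_numeral sum.neutral atMost_iff zero_neq_one)
  have wsV: "ws \<in> Vreal n d i"
    by (rule V_limit[of "\<lambda>m. w (r m)"]) (use wV r wsnz in auto)
  have "qform ?K A ws \<le> 0"
  proof (rule LIMSEQ_le)
    show "(\<lambda>m. qform ?K A (w (r m))) \<longlonglongrightarrow> qform ?K A ws" using r(2) by (rule qform_tendsto_z)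
    show "(\<lambda>m. inverse (real (Suc (r m)))) \<longlonglongrightarrow> 0" using r(1) by (rule inv_Suc_tendsto_sub)
    show "\<exists>N. \<forall>m\<ge>N. qform ?K A (w (r m)) \<le> inverse (real (Suc (r m)))"
      using wq by (auto intro: less_imp_le)
  qed
  then show False using pos wsV by force
qed

lemma mnorm_zero: "mnorm K (\<lambda>a b. 0) = 0" unfolding mnorm_def by simp

lemma fnorm_zero_coords:
  assumes "fnorm n d g = 0" "\<gamma> \<in> exps n (2*d)" shows "g \<gamma> = 0"
  using coord_le_fnorm[OF assms(2), of g] assms(1) by simp

lemma Gmap_eq_zero:
  assumes "\<forall>\<gamma>\<in>exps n (2*d). Gmap n d A \<gamma> = 0" shows "Gmap n d A \<gamma> = 0"
proof (cases "\<gamma> \<in> exps n (2*d)")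
  case True then show ?thesis using assms by blast
next
  case False then show ?thesis using Gmap_forms[of n d A] by (auto simp: forms_def)
qed

lemma bounded_rep:
  "\<exists>\<kappa>. \<forall>A\<in>Pset n d i. \<exists>B\<in>Pset n d i. Gmap n d B = Gmap n d A \<and>
        mnorm (kdim n d) B \<le> \<kappa> * fnorm n d (Gmap n d A)"
proof (rule ccontr)
  let ?K = "kdim n d" and ?P = "Pset n d i"
  assume neg: "\<not> ?thesis"
  have key: "\<exists>C. C \<in> ?P \<and> mnorm ?K C \<le> 2 \<and> fnorm n d (Gmap n d C) \<le> inverse (real (Suc m)) \<and>
     (\<forall>B\<in>?P. Gmap n d B = Gmap n d C \<longrightarrow> 1 \<le> mnorm ?K B)" for m
  proof -
    have "\<not> (\<forall>A\<in>?P. \<exists>B\<in>?P. Gmap n d B = Gmap n d A \<and> mnorm ?K B \<le> real (Suc m) * fnorm n d (Gmap n d A))"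
      using neg by blast
    then obtain A where A: "A \<in> ?P" "\<forall>B\<in>?P. Gmap n d B = Gmap n d A \<longrightarrow> real (Suc m) * fnorm n d (Gmap n d A) < mnorm ?K B"
      by (auto simp: not_le)
    define S where "S = {mnorm ?K B | B. B \<in> ?P \<and> Gmap n d B = Gmap n d A}"
    define \<nu> where "\<nu> = Inf S"
    have Sne: "S \<noteq> {}" using A(1) by (auto simp: S_def)
    have Sbdd: "bdd_below S" unfolding S_def bdd_below_def using mnorm_nonneg by blast
    have fpos: "0 < fnorm n d (Gmap n d A)"
    proof (rule ccontr)
      assume "\<not> 0 < fnorm n d (Gmap n d A)"
      then have f0: "fnorm n d (Gmap n d A) = 0" using fnorm_nonneg[of n d "Gmap n d A"] by linarith
      have "Gmap n d A = Gmap n d (\<lambda>a b. 0)"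
      proof
        fix \<gamma> show "Gmap n d A \<gamma> = Gmap n d (\<lambda>a b. 0) \<gamma>"
          using Gmap_eq_zero[of n d A \<gamma>] fnorm_zero_coords[OF f0] by (simp add: Gmap_zero)
      qed
      then have "real (Suc m) * fnorm n d (Gmap n d A) < mnorm ?K (\<lambda>a b. 0)"
        using A(2) Pset_zero by metis
      then show False using f0 by (simp add: mnorm_zero)
    qed
    have \<nu>low: "real (Suc m) * fnorm n d (Gmap n d A) \<le> \<nu>"
      unfolding \<nu>_def by (rule cInf_greatest[OF Sne]) (use A(2) in \<open>auto simp: S_def intro: less_imp_le\<close>)
    have \<nu>pos: "0 < \<nu>"
      using \<nu>low fpos by (smt (verit) mult_pos_pos of_nat_0_less_iff zero_less_Suc)
    have "Inf S < 2 * \<nu>" using \<nu>pos by (simp add: \<nu>_def)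
    then obtain x where "x \<in> S" "x < 2 * \<nu>" using cInf_lessD[OF Sne] by blast
    then obtain B1 where B1: "B1 \<in> ?P" "Gmap n d B1 = Gmap n d A" "mnorm ?K B1 < 2 * \<nu>"
      by (auto simp: S_def)
    define C where "C = (\<lambda>a b. (1/\<nu>) * B1 a b)"
    have CP: "C \<in> ?P" unfolding C_def using B1(1) \<nu>pos by (intro Pset_scale) auto
    have Cn: "mnorm ?K C \<le> 2"
    proof -
      have "mnorm ?K C = (1/\<nu>) * mnorm ?K B1" unfolding C_def mnorm_scale using \<nu>pos by simp
      also have "\<dots> \<le> (1/\<nu>) * (2 * \<nu>)" using B1(3) \<nu>pos by (intro mult_left_mono) auto
      also have "\<dots> = 2" using \<nu>pos by simp
      finally show ?thesis .
    qed
    have GC: "Gmap n d C = (\<lambda>\<gamma>. (1/\<nu>) * Gmap n d A \<gamma>)"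
    proof
      fix \<gamma> show "Gmap n d C \<gamma> = (1/\<nu>) * Gmap n d A \<gamma>" unfolding C_def Gmap_scale B1(2) ..
    qed
    have Cf: "fnorm n d (Gmap n d C) \<le> inverse (real (Suc m))"
    proof -
      have "fnorm n d (Gmap n d C) = (1/\<nu>) * fnorm n d (Gmap n d A)" unfolding GC fnorm_scale using \<nu>pos by simp
      also have "\<dots> \<le> inverse (real (Suc m))"
        using \<nu>low \<nu>pos by (simp add: field_simps)
      finally show ?thesis .
    qed
    have Cmin: "\<forall>B\<in>?P. Gmap n d B = Gmap n d C \<longrightarrow> 1 \<le> mnorm ?K B"
    proof (intro ballI impI)
      fix B assume B: "B \<in> ?P" "Gmap n d B = Gmap n d C"
      define B' where "B' = (\<lambda>a b. \<nu> * B a b)"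
      have "B' \<in> ?P" unfolding B'_def using B(1) \<nu>pos by (intro Pset_scale) auto
      moreover have "Gmap n d B' = Gmap n d A"
      proof
        fix \<gamma> show "Gmap n d B' \<gamma> = Gmap n d A \<gamma>"
          unfolding B'_def Gmap_scale B(2) GC using \<nu>pos by simp
      qed
      ultimately have "mnorm ?K B' \<in> S" by (auto simp: S_def)
      then have "\<nu> \<le> mnorm ?K B'" unfolding \<nu>_def using Sbdd by (rule cInf_lower)
      also have "mnorm ?K B' = \<nu> * mnorm ?K B" unfolding B'_def mnorm_scale using \<nu>pos by simp
      finally show "1 \<le> mnorm ?K B" using \<nu>pos by simp
    qed
    show ?thesis using CP Cn Cf Cmin by blast
  qed
  have "\<exists>C. \<forall>m. C m \<in> ?P \<and> mnorm ?K (C m) \<le> 2 \<and> fnorm n d (Gmap n d (C m)) \<le> inverse (real (Suc m)) \<and>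
     (\<forall>B\<in>?P. Gmap n d B = Gmap n d (C m) \<longrightarrow> 1 \<le> mnorm ?K B)"
    by (rule choice) (use key in blast)
  then obtain C where C: "\<And>m. C m \<in> ?P" "\<And>m. mnorm ?K (C m) \<le> 2"
    "\<And>m. fnorm n d (Gmap n d (C m)) \<le> inverse (real (Suc m))"
    "\<And>m B. B \<in> ?P \<Longrightarrow> Gmap n d B = Gmap n d (C m) \<Longrightarrow> 1 \<le> mnorm ?K B"
    by blast
  have "\<forall>m. \<forall>a\<le>?K. \<forall>b\<le>?K. \<bar>C m a b\<bar> \<le> 2"
    using entry_le_mnorm C(2) by (meson order_trans)
  then obtain r As where r: "strict_mono r" "\<forall>a\<le>?K. \<forall>b\<le>?K. (\<lambda>m. C (r m) a b) \<longlonglongrightarrow> As a b"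
    "\<forall>a b. ?K < a \<or> ?K < b \<longrightarrow> As a b = 0"
    using bw_matrix by blast
  have AsP: "As \<in> ?P" by (rule lim_Pset[of "\<lambda>m. C (r m)"]) (use C(1) r in auto)
  have GAs: "\<forall>\<gamma>. Gmap n d As \<gamma> = 0"
  proof
    fix \<gamma>
    show "Gmap n d As \<gamma> = 0"
    proof (rule Gmap_eq_zero, intro ballI)
      fix \<gamma>' assume g: "\<gamma>' \<in> exps n (2*d)"
      have t1: "(\<lambda>m. Gmap n d (C (r m)) \<gamma>') \<longlonglongrightarrow> Gmap n d As \<gamma>'" using r(2) by (rule Gmap_tendsto)
      have t2: "(\<lambda>m. Gmap n d (C (r m)) \<gamma>') \<longlonglongrightarrow> 0"
      proof (rule Lim_null_comparison)
        show "\<forall>\<^sub>F m in sequentially. norm (Gmap n d (C (r m)) \<gamma>') \<le> inverse (real (Suc (r m)))"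
        proof (rule always_eventually, rule allI)
          fix m show "norm (Gmap n d (C (r m)) \<gamma>') \<le> inverse (real (Suc (r m)))"
            using coord_le_fnorm[OF g, of "Gmap n d (C (r m))"] C(3)[of "r m"] by simp
        qed
        show "(\<lambda>m. inverse (real (Suc (r m)))) \<longlonglongrightarrow> 0" using r(1) by (rule inv_Suc_tendsto_sub)
      qed
      show "Gmap n d As \<gamma>' = 0" using t1 t2 LIMSEQ_unique by blast
    qed
  qed
  have q0: "\<forall>z\<in>Vreal n d i. qform ?K As z = 0"
    using lineality[of As n d i] AsP GAs by (auto simp: Pset_def)
  define D where "D = (\<lambda>m a b. C (r m) a b + (-1) * As a b)"
  have "1 \<le> mnorm ?K (D m)" for m
  proof (rule C(4))
    have s1: "D m \<in> symmat ?K" unfolding D_def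
      by (rule symmat_lin) (use C(1)[of "r m"] AsP in \<open>auto simp: Pset_def\<close>)
    have s2: "0 \<le> qform ?K (D m) z" if z: "z \<in> Vreal n d i" for z
    proof -
      have "qform ?K (D m) z = qform ?K (C (r m)) z + (-1) * qform ?K As z"
        unfolding D_def by (rule qform_add)
      then show ?thesis using q0 z C(1)[of "r m"] by (simp add: Pset_def)
    qed
    show "D m \<in> ?P" using s1 s2 by (simp add: Pset_def)
    show "Gmap n d (D m) = Gmap n d (C (r m))"
    proof
      fix \<gamma> show "Gmap n d (D m) \<gamma> = Gmap n d (C (r m)) \<gamma>" unfolding D_def Gmap_add using GAs by simp
    qed
  qed
  moreover have "(\<lambda>m. mnorm ?K (D m)) \<longlonglongrightarrow> mnorm ?K (\<lambda>a b. As a b + (-1) * As a b)"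
    unfolding D_def
  proof (rule mnorm_tendsto, intro allI impI)
    fix a b assume "a \<le> ?K" "b \<le> ?K"
    then have "(\<lambda>m. C (r m) a b) \<longlonglongrightarrow> As a b" using r(2) by blast
    then show "(\<lambda>m. C (r m) a b + (-1) * As a b) \<longlonglongrightarrow> As a b + (-1) * As a b"
      by (intro tendsto_add tendsto_const)
  qed
  moreover have "mnorm ?K (\<lambda>a b. As a b + (-1) * As a b) = 0" by (simp add: mnorm_def)
  ultimately show False using LIMSEQ_le_const[of "\<lambda>m. mnorm ?K (D m)" 0 1] by auto
qed

lemma seq_closed:
  assumes g: "\<forall>m. g m \<in> Ccone n d i" and f: "f \<in> forms n (2*d)"
    and lim: "\<forall>\<gamma>\<in>exps n (2*d). (\<lambda>m. g m \<gamma>) \<longlonglongrightarrow> f \<gamma>"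
  shows "f \<in> Ccone n d i"
proof -
  let ?K = "kdim n d" and ?P = "Pset n d i"
  obtain \<kappa> where \<kappa>: "\<forall>A\<in>?P. \<exists>B\<in>?P. Gmap n d B = Gmap n d A \<and> mnorm ?K B \<le> \<kappa> * fnorm n d (Gmap n d A)"
    using bounded_rep by blast
  have "\<forall>m. \<exists>B. B \<in> ?P \<and> Gmap n d B = g m \<and> mnorm ?K B \<le> \<kappa> * fnorm n d (g m)"
  proof
    fix m
    obtain A where "A \<in> ?P" "Gmap n d A = g m" using g unfolding Ccone_Pset by blast
    then show "\<exists>B. B \<in> ?P \<and> Gmap n d B = g m \<and> mnorm ?K B \<le> \<kappa> * fnorm n d (g m)"
      using \<kappa> by metis
  qed
  then obtain B where B: "\<And>m. B m \<in> ?P" "\<And>m. Gmap n d (B m) = g m"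
    "\<And>m. mnorm ?K (B m) \<le> \<kappa> * fnorm n d (g m)"
    by metis
  have "(\<lambda>m. fnorm n d (g m)) \<longlonglongrightarrow> fnorm n d f"
    unfolding fnorm_def
  proof (rule tendsto_sum)
    fix \<gamma> assume "\<gamma> \<in> exps n (2*d)"
    then show "(\<lambda>m. \<bar>g m \<gamma>\<bar>) \<longlonglongrightarrow> \<bar>f \<gamma>\<bar>" using lim by (intro tendsto_rabs) simp
  qed
  then have "Bseq (\<lambda>m. fnorm n d (g m))" by (intro convergent_imp_Bseq convergentI)
  then obtain M where M: "0 < M" "\<forall>m. norm (fnorm n d (g m)) \<le> M" by (rule BseqE)
  have bnd: "\<forall>m. \<forall>a\<le>?K. \<forall>b\<le>?K. \<bar>B m a b\<bar> \<le> \<bar>\<kappa>\<bar> * M"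
  proof (intro allI impI)
    fix m a b assume ab: "a \<le> ?K" "b \<le> ?K"
    have "\<bar>B m a b\<bar> \<le> mnorm ?K (B m)" using ab by (rule entry_le_mnorm)
    also have "\<dots> \<le> \<kappa> * fnorm n d (g m)" by (rule B(3))
    also have "\<dots> \<le> \<bar>\<kappa>\<bar> * fnorm n d (g m)" using fnorm_nonneg by (intro mult_right_mono) auto
    also have "\<dots> \<le> \<bar>\<kappa>\<bar> * M" using M(2) fnorm_nonneg by (intro mult_left_mono) auto
    finally show "\<bar>B m a b\<bar> \<le> \<bar>\<kappa>\<bar> * M" .
  qed
  obtain r As where r: "strict_mono r" "\<forall>a\<le>?K. \<forall>b\<le>?K. (\<lambda>m. B (r m) a b) \<longlonglongrightarrow> As a b"
    "\<forall>a b. ?K < a \<or> ?K < b \<longrightarrow> As a b = 0"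
    using bw_matrix[OF bnd] by blast
  have AsP: "As \<in> ?P" by (rule lim_Pset[of "\<lambda>m. B (r m)"]) (use B(1) r in auto)
  have "Gmap n d As = f"
  proof
    fix \<gamma> show "Gmap n d As \<gamma> = f \<gamma>"
    proof (cases "\<gamma> \<in> exps n (2*d)")
      case True
      have t1: "(\<lambda>m. Gmap n d (B (r m)) \<gamma>) \<longlonglongrightarrow> Gmap n d As \<gamma>" using r(2) by (rule Gmap_tendsto)
      have "((\<lambda>m. g m \<gamma>) \<circ> r) \<longlonglongrightarrow> f \<gamma>" using LIMSEQ_subseq_LIMSEQ[OF lim[rule_format, OF True] r(1)] .
      then have t2: "(\<lambda>m. Gmap n d (B (r m)) \<gamma>) \<longlonglongrightarrow> f \<gamma>" by (simp add: B(2) o_def)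
      show ?thesis using t1 t2 LIMSEQ_unique by blast
    next
      case False
      then show ?thesis using Gmap_forms[of n d As] f by (auto simp: forms_def)
    qed
  qed
  then show ?thesis unfolding Ccone_Pset using f AsP by blast
qed

definition fbox :: "nat \<Rightarrow> nat \<Rightarrow> ((nat \<Rightarrow> nat) \<Rightarrow> real) \<Rightarrow> real \<Rightarrow> ((nat \<Rightarrow> nat) \<Rightarrow> real) set" where
  "fbox n d f \<delta> = {g \<in> forms n (2*d). \<forall>\<gamma>\<in>exps n (2*d). \<bar>g \<gamma> - f \<gamma>\<bar> < \<delta>}"

lemma fbox_open: "openin (top_of_set (forms n (2*d))) (fbox n d f \<delta>)"
proof -
  have eq: "{g::(nat\<Rightarrow>nat)\<Rightarrow>real. \<forall>\<gamma>\<in>exps n (2*d). \<bar>g \<gamma> - f \<gamma>\<bar> < \<delta>} =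
            (\<Inter>\<gamma>\<in>exps n (2*d). {g. \<bar>g \<gamma> - f \<gamma>\<bar> < \<delta>})" by auto
  have "open {g::(nat\<Rightarrow>nat)\<Rightarrow>real. \<bar>g \<gamma> - f \<gamma>\<bar> < \<delta>}" for \<gamma>
    by (rule open_Collect_less) (intro continuous_intros continuous_on_product_coordinates)+
  then have "open {g::(nat\<Rightarrow>nat)\<Rightarrow>real. \<forall>\<gamma>\<in>exps n (2*d). \<bar>g \<gamma> - f \<gamma>\<bar> < \<delta>}"
    unfolding eq by (intro open_INT finite_exps) auto
  moreover have "fbox n d f \<delta> = forms n (2*d) \<inter> {g. \<forall>\<gamma>\<in>exps n (2*d). \<bar>g \<gamma> - f \<gamma>\<bar> < \<delta>}"
    unfolding fbox_def by auto
  ultimately show ?thesis unfolding openin_open by blast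
qed

lemma fbox_center: "f \<in> forms n (2*d) \<Longrightarrow> 0 < \<delta> \<Longrightarrow> f \<in> fbox n d f \<delta>"
  unfolding fbox_def by auto

lemma Ccone_forms: "Ccone n d i \<subseteq> forms n (2*d)"
  unfolding Ccone_def by auto

lemma closed_C: "closedin (top_of_set (forms n (2*d))) (Ccone n d i)"
  unfolding closedin_def
proof (intro conjI)
  show "Ccone n d i \<subseteq> topspace (top_of_set (forms n (2*d)))" using Ccone_forms by simp
  show "openin (top_of_set (forms n (2*d))) (topspace (top_of_set (forms n (2*d))) - Ccone n d i)"
    unfolding openin_subopen[of _ "topspace (top_of_set (forms n (2*d))) - Ccone n d i"]
  proof
    fix f assume "f \<in> topspace (top_of_set (forms n (2*d))) - Ccone n d i"
    then have f: "f \<in> forms n (2*d)" "f \<notin> Ccone n d i" by auto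
    show "\<exists>T. openin (top_of_set (forms n (2*d))) T \<and> f \<in> T \<and> T \<subseteq> topspace (top_of_set (forms n (2*d))) - Ccone n d i"
    proof (rule ccontr)
      assume neg: "\<not> ?thesis"
      have "\<exists>h. h \<in> Ccone n d i \<and> h \<in> fbox n d f (inverse (real (Suc m)))" for m
      proof -
        have "\<not> fbox n d f (inverse (real (Suc m))) \<subseteq> forms n (2*d) - Ccone n d i"
          using neg fbox_open fbox_center[OF f(1), of "inverse (real (Suc m))"] by auto
        then show ?thesis unfolding fbox_def by auto
      qed
      then obtain h where h: "\<And>m. h m \<in> Ccone n d i" "\<And>m. h m \<in> fbox n d f (inverse (real (Suc m)))"
        by metis
      have "\<forall>\<gamma>\<in>exps n (2*d). (\<lambda>m. h m \<gamma>) \<longlonglongrightarrow> f \<gamma>"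
      proof
        fix \<gamma> assume g: "\<gamma> \<in> exps n (2*d)"
        have "(\<lambda>m. h m \<gamma> - f \<gamma>) \<longlonglongrightarrow> 0"
        proof (rule Lim_null_comparison)
          show "\<forall>\<^sub>F m in sequentially. norm (h m \<gamma> - f \<gamma>) \<le> inverse (real (Suc m))"
          proof (rule always_eventually, rule allI)
            fix m show "norm (h m \<gamma> - f \<gamma>) \<le> inverse (real (Suc m))"
              using h(2)[of m] g unfolding fbox_def by (auto intro: less_imp_le)
          qed
          show "(\<lambda>m. inverse (real (Suc m))) \<longlonglongrightarrow> 0" by (rule LIMSEQ_inverse_real_of_nat)
        qed
        then have "(\<lambda>m. (h m \<gamma> - f \<gamma>) + f \<gamma>) \<longlonglongrightarrow> 0 + f \<gamma>" by (intro tendsto_add tendsto_const)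
        then show "(\<lambda>m. h m \<gamma>) \<longlonglongrightarrow> f \<gamma>" by simp
      qed
      then have "f \<in> Ccone n d i" using seq_closed h(1) f(1) by blast
      then show False using f(2) by blast
    qed
  qed
qed

definition Imat :: "nat \<Rightarrow> nat \<Rightarrow> nat \<Rightarrow> real" where
  "Imat K = (\<lambda>a b. if a = b \<and> a \<le> K then 1 else 0)"

lemma Imat_symmat: "Imat K \<in> symmat K"
  unfolding symmat_def Imat_def by auto

lemma qform_Imat: "qform K (Imat K) z = vnorm K z"
proof -
  have "qform K (Imat K) z = (\<Sum>a\<le>K. z a * z a)"
    unfolding qform_def
  proof (intro sum.cong refl)
    fix a assume a: "a \<in> {..K}"
    have "(\<Sum>b\<le>K. z a * Imat K a b * z b) = (\<Sum>b\<le>K. if b = a then z a * z b else 0)"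
      by (intro sum.cong refl) (use a in \<open>auto simp: Imat_def\<close>)
    also have "\<dots> = z a * z a" using a by simp
    finally show "(\<Sum>b\<le>K. z a * Imat K a b * z b) = z a * z a" .
  qed
  then show ?thesis unfolding vnorm_def by (simp add: power2_eq_square)
qed

lemma sum_swap3:
  "(\<Sum>a\<in>A. \<Sum>b\<in>B. \<Sum>c\<in>C. F a b c) = (\<Sum>c\<in>C. \<Sum>a\<in>A. \<Sum>b\<in>B. (F a b c :: real))"
proof -
  have "(\<Sum>a\<in>A. \<Sum>b\<in>B. \<Sum>c\<in>C. F a b c) = (\<Sum>a\<in>A. \<Sum>c\<in>C. \<Sum>b\<in>B. F a b c)"
    by (intro sum.cong refl) (rule sum.swap)
  also have "\<dots> = (\<Sum>c\<in>C. \<Sum>a\<in>A. \<Sum>b\<in>B. F a b c)" by (rule sum.swap)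
  finally show ?thesis .
qed

lemma interior_char:
  "f \<in> top_of_set (forms n (2*d)) interior_of Ccone n d i \<longleftrightarrow>
   f \<in> Ccone n d i \<and> (\<exists>A\<in>symmat (kdim n d). Gmap n d A = f \<and> (\<forall>z\<in>Vreal n d i. 0 < qform (kdim n d) A z))"
proof
  let ?K = "kdim n d" and ?E2 = "exps n (2*d)" and ?X = "top_of_set (forms n (2*d))"
  assume "f \<in> ?X interior_of Ccone n d i"
  then obtain T where T: "openin ?X T" "f \<in> T" "T \<subseteq> Ccone n d i" unfolding interior_of_def by blast
  obtain U where U: "open U" "T = forms n (2*d) \<inter> U" using T(1) unfolding openin_open by blast
  define h where "h = Gmap n d (Imat ?K)"
  have hf: "h \<in> forms n (2*d)" unfolding h_def by (rule Gmap_forms)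
  have ff: "f \<in> forms n (2*d)" using T(2) U(2) by blast
  define \<phi> where "\<phi> = (\<lambda>\<epsilon>::real. \<lambda>\<gamma>. f \<gamma> - \<epsilon> * h \<gamma>)"
  have "continuous_on UNIV \<phi>"
    unfolding \<phi>_def by (intro continuous_on_coordinatewise_then_product continuous_intros)
  then have "open (\<phi> -` U)" using U(1) by (simp add: continuous_on_open_vimage)
  moreover have "0 \<in> \<phi> -` U" using T(2) U(2) by (simp add: \<phi>_def)
  ultimately obtain e where e: "0 < e" "ball 0 e \<subseteq> \<phi> -` U" using open_contains_ball by blast
  define \<epsilon> where "\<epsilon> = e / 2"
  have \<epsilon>: "0 < \<epsilon>" "\<epsilon> \<in> ball 0 e" using e(1) by (auto simp: \<epsilon>_def)
  have "\<phi> \<epsilon> \<in> forms n (2*d)" using ff hf by (auto simp: forms_def \<phi>_def)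
  then have "\<phi> \<epsilon> \<in> T" using \<epsilon>(2) e(2) U(2) by blast
  then have "\<phi> \<epsilon> \<in> Ccone n d i" using T(3) by blast
  then obtain B where B: "B \<in> symmat ?K" "Gmap n d B = \<phi> \<epsilon>" "\<forall>z\<in>Vreal n d i. 0 \<le> qform ?K B z"
    unfolding Ccone_def by blast
  define A where "A = (\<lambda>a b. B a b + \<epsilon> * Imat ?K a b)"
  have "A \<in> symmat ?K" unfolding A_def using B(1) Imat_symmat by (rule symmat_lin)
  moreover have "Gmap n d A = f"
  proof
    fix \<gamma> show "Gmap n d A \<gamma> = f \<gamma>" unfolding A_def Gmap_add B(2) by (simp add: \<phi>_def h_def)
  qed
  moreover have "\<forall>z\<in>Vreal n d i. 0 < qform ?K A z"
  proof
    fix z assume z: "z \<in> Vreal n d i"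
    have "qform ?K A z = qform ?K B z + \<epsilon> * vnorm ?K z" unfolding A_def qform_add qform_Imat ..
    moreover have "0 < vnorm ?K z" using V_nz[OF z] by (rule vnorm_pos)
    ultimately show "0 < qform ?K A z" using B(3) z \<epsilon>(1) by (smt (verit) mult_pos_pos)
  qed
  moreover have "f \<in> Ccone n d i" using T(2,3) by blast
  ultimately show "f \<in> Ccone n d i \<and> (\<exists>A\<in>symmat ?K. Gmap n d A = f \<and> (\<forall>z\<in>Vreal n d i. 0 < qform ?K A z))"
    by blast
next
  let ?K = "kdim n d" and ?E2 = "exps n (2*d)" and ?X = "top_of_set (forms n (2*d))"
  assume "f \<in> Ccone n d i \<and> (\<exists>A\<in>symmat ?K. Gmap n d A = f \<and> (\<forall>z\<in>Vreal n d i. 0 < qform ?K A z))"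
  then obtain A0 where fC: "f \<in> Ccone n d i" and A0: "A0 \<in> symmat ?K" "Gmap n d A0 = f"
    "\<forall>z\<in>Vreal n d i. 0 < qform ?K A0 z" by blast
  have ff: "f \<in> forms n (2*d)" using fC Ccone_forms by blast
  obtain c where c: "0 < c" "\<forall>z\<in>Vreal n d i. c * vnorm ?K z \<le> qform ?K A0 z"
    using coercive[OF A0(3)] by blast
  have "\<forall>\<gamma>\<in>?E2. \<exists>E. E \<in> symmat ?K \<and> (\<forall>\<gamma>'. Gmap n d E \<gamma>' = (if \<gamma>' = \<gamma> then 1 else 0)) \<and> mnorm ?K E \<le> 1"
  proof
    fix \<gamma> assume "\<gamma> \<in> ?E2"
    from right_inv[OF this] show "\<exists>E. E \<in> symmat ?K \<and> (\<forall>\<gamma>'. Gmap n d E \<gamma>' = (if \<gamma>' = \<gamma> then 1 else 0)) \<and> mnorm ?K E \<le> 1"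
      unfolding mnorm_def .
  qed
  from bchoice[OF this] obtain Em where Em0: "\<forall>\<gamma>\<in>?E2. Em \<gamma> \<in> symmat ?K \<and> (\<forall>\<gamma>'. Gmap n d (Em \<gamma>) \<gamma>' = (if \<gamma>' = \<gamma> then 1 else 0)) \<and> mnorm ?K (Em \<gamma>) \<le> 1"
    by (elim exE)
  have Em: "\<And>\<gamma>. \<gamma> \<in> ?E2 \<Longrightarrow> Em \<gamma> \<in> symmat ?K"
    "\<And>\<gamma> \<gamma>'. \<gamma> \<in> ?E2 \<Longrightarrow> Gmap n d (Em \<gamma>) \<gamma>' = (if \<gamma>' = \<gamma> then 1 else 0)"
    "\<And>\<gamma>. \<gamma> \<in> ?E2 \<Longrightarrow> mnorm ?K (Em \<gamma>) \<le> 1"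
    using Em0 by blast+
  define N where "N = card ?E2"
  define \<delta> where "\<delta> = c / (real N + 1)"
  have \<delta>1: "0 < \<delta>" using c(1) by (simp add: \<delta>_def)
  have "real N * \<delta> = c * (real N / (real N + 1))" by (simp add: \<delta>_def)
  also have "\<dots> < c * 1" using c(1) by (intro mult_strict_left_mono) auto
  finally have \<delta>: "0 < \<delta>" "real N * \<delta> < c" using \<delta>1 by auto
  have "fbox n d f \<delta> \<subseteq> Ccone n d i"
  proof
    fix g assume g: "g \<in> fbox n d f \<delta>"
    then have gf: "g \<in> forms n (2*d)" and gd: "\<forall>\<gamma>\<in>?E2. \<bar>g \<gamma> - f \<gamma>\<bar> < \<delta>" unfolding fbox_def by auto
    define D where "D = (\<lambda>a b. \<Sum>\<gamma>\<in>?E2. (g \<gamma> - f \<gamma>) * Em \<gamma> a b)"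
    have Dsym: "D \<in> symmat ?K"
      unfolding symmat_def
    proof (intro CollectI conjI allI impI)
      fix a b show "D a b = D b a" unfolding D_def
        by (intro sum.cong refl) (use Em(1) in \<open>auto simp: symmat_def\<close>)
    next
      fix a b assume "?K < a \<or> ?K < b" then show "D a b = 0" unfolding D_def
        using Em(1) by (auto simp: symmat_def intro!: sum.neutral)
    qed
    have GD: "Gmap n d D \<gamma>' = g \<gamma>' - f \<gamma>'" for \<gamma>'
    proof -
      have "Gmap n d D \<gamma>' = (\<Sum>\<gamma>\<in>?E2. (g \<gamma> - f \<gamma>) * Gmap n d (Em \<gamma>) \<gamma>')"
        unfolding D_def by (rule Gmap_sum[OF finite_exps])
      also have "\<dots> = (\<Sum>\<gamma>\<in>?E2. if \<gamma> = \<gamma>' then g \<gamma> - f \<gamma> else 0)"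
        by (intro sum.cong refl) (auto simp: Em(2))
      also have "\<dots> = (if \<gamma>' \<in> ?E2 then g \<gamma>' - f \<gamma>' else 0)"
        by (simp add: finite_exps)
      also have "\<dots> = g \<gamma>' - f \<gamma>'" using gf ff by (auto simp: forms_def)
      finally show ?thesis .
    qed
    have mD: "mnorm ?K D < c"
    proof -
      have "mnorm ?K D \<le> (\<Sum>a\<le>?K. \<Sum>b\<le>?K. \<Sum>\<gamma>\<in>?E2. \<bar>g \<gamma> - f \<gamma>\<bar> * \<bar>Em \<gamma> a b\<bar>)"
        unfolding mnorm_def D_def
      proof (intro sum_mono)
        fix a b
        have "\<bar>\<Sum>\<gamma>\<in>?E2. (g \<gamma> - f \<gamma>) * Em \<gamma> a b\<bar> \<le> (\<Sum>\<gamma>\<in>?E2. \<bar>(g \<gamma> - f \<gamma>) * Em \<gamma> a b\<bar>)"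
          by (rule sum_abs)
        then show "\<bar>\<Sum>\<gamma>\<in>?E2. (g \<gamma> - f \<gamma>) * Em \<gamma> a b\<bar> \<le> (\<Sum>\<gamma>\<in>?E2. \<bar>g \<gamma> - f \<gamma>\<bar> * \<bar>Em \<gamma> a b\<bar>)"
          by (simp add: abs_mult)
      qed
      also have "\<dots> = (\<Sum>\<gamma>\<in>?E2. \<Sum>a\<le>?K. \<Sum>b\<le>?K. \<bar>g \<gamma> - f \<gamma>\<bar> * \<bar>Em \<gamma> a b\<bar>)"
        by (rule sum_swap3)
      also have "\<dots> = (\<Sum>\<gamma>\<in>?E2. \<bar>g \<gamma> - f \<gamma>\<bar> * mnorm ?K (Em \<gamma>))"
        unfolding mnorm_def by (simp add: sum_distrib_left)
      also have "\<dots> \<le> (\<Sum>\<gamma>\<in>?E2. \<delta>)"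
      proof (rule sum_mono)
        fix \<gamma> assume gm: "\<gamma> \<in> ?E2"
        have "\<bar>g \<gamma> - f \<gamma>\<bar> * mnorm ?K (Em \<gamma>) \<le> \<bar>g \<gamma> - f \<gamma>\<bar> * 1"
          using Em(3)[OF gm] by (intro mult_left_mono) auto
        also have "\<dots> \<le> \<delta>" using gd gm by (auto intro: less_imp_le)
        finally show "\<bar>g \<gamma> - f \<gamma>\<bar> * mnorm ?K (Em \<gamma>) \<le> \<delta>" .
      qed
      also have "\<dots> = real N * \<delta>" by (simp add: N_def)
      also have "\<dots> < c" by (rule \<delta>(2))
      finally show ?thesis .
    qed
    define A where "A = (\<lambda>a b. A0 a b + 1 * D a b)"
    have "A \<in> symmat ?K" unfolding A_def using A0(1) Dsym by (rule symmat_lin)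
    moreover have "Gmap n d A = g"
    proof
      fix \<gamma> show "Gmap n d A \<gamma> = g \<gamma>" unfolding A_def Gmap_add GD A0(2) by simp
    qed
    moreover have "\<forall>z\<in>Vreal n d i. 0 \<le> qform ?K A z"
    proof
      fix z assume z: "z \<in> Vreal n d i"
      have "qform ?K A z = qform ?K A0 z + qform ?K D z" unfolding A_def qform_add by simp
      moreover have "c * vnorm ?K z \<le> qform ?K A0 z" using c(2) z by blast
      moreover have "\<bar>qform ?K D z\<bar> \<le> mnorm ?K D * vnorm ?K z" by (rule qform_bound)
      moreover have "mnorm ?K D * vnorm ?K z \<le> c * vnorm ?K z"
        using mD vnorm_nonneg by (intro mult_right_mono) auto
      ultimately show "0 \<le> qform ?K A z" by linarith
    qed
    ultimately show "g \<in> Ccone n d i" unfolding Ccone_def using gf by blast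
  qed
  moreover have "openin ?X (fbox n d f \<delta>)" by (rule fbox_open)
  moreover have "f \<in> fbox n d f \<delta>" using ff \<delta>(1) by (rule fbox_center)
  ultimately show "f \<in> ?X interior_of Ccone n d i"
    unfolding interior_of_def by (intro CollectI exI[of _ "fbox n d f \<delta>"] conjI)
qed

theorem corollary2p6:
  fixes n d i :: nat
  assumes "n \<ge> 1" and "d \<ge> 1" and "i \<le> kdim n d - n"
  shows "(top_of_set (forms n (2*d))) frontier_of (Ccone n d i) =
         {f \<in> Ccone n d i. \<forall>A\<in>symmat (kdim n d). Gmap n d A = f \<longrightarrow>
              (\<exists>z\<in>Vreal n d i. qform (kdim n d) A z \<le> 0)}"
proof -
  have "(top_of_set (forms n (2*d))) frontier_of (Ccone n d i) =
        Ccone n d i - (top_of_set (forms n (2*d))) interior_of (Ccone n d i)"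
    unfolding frontier_of_def closure_of_closedin[OF closed_C] ..
  also have "\<dots> = {f \<in> Ccone n d i. \<forall>A\<in>symmat (kdim n d). Gmap n d A = f \<longrightarrow>
              (\<exists>z\<in>Vreal n d i. qform (kdim n d) A z \<le> 0)}"
  proof (rule set_eqI)
    fix f
    have l: "(\<not> (\<exists>A\<in>symmat (kdim n d). Gmap n d A = f \<and> (\<forall>z\<in>Vreal n d i. 0 < qform (kdim n d) A z))) =
             (\<forall>A\<in>symmat (kdim n d). Gmap n d A = f \<longrightarrow> (\<exists>z\<in>Vreal n d i. qform (kdim n d) A z \<le> 0))"
      by (meson not_less)
    show "f \<in> Ccone n d i - top_of_set (forms n (2*d)) interior_of Ccone n d i \<longleftrightarrow>
          f \<in> {f \<in> Ccone n d i. \<forall>A\<in>symmat (kdim n d). Gmap n d A = f \<longrightarrow>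
              (\<exists>z\<in>Vreal n d i. qform (kdim n d) A z \<le> 0)}"
      using interior_char[of f n d i] l by blast
  qed
  finally show ?thesis .
qed

end
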